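(* Let $L=1$ and $\vec m=(a,b)\in\mathcal R^2$ be arbitrary. For every topological space $X$, all $k\in\mathbb N$, $n\ge0$ and every cycle $u\in\mathcal K_n(X)$ (i.e. $\partial_n(u)=0$), the following equalities hold in ${}_{\vec m}\mathcal H_n(X)$: $$[a^k\,\mathcal{SD}_n^{(k)}(u)]=[b^k u],\qquad [b^k\,\mathcal{SD}_n^{(k)}(u)]=[a^k u],$$ where $\mathcal{SD}_n^{(k)}$ denotes the $k$-fold composite of $\mathcal{SD}_n$.
   Context: $\mathcal R$ is a commutative ring with unit. $\mathcal S_n(X)$ = continuous maps $[0,1]^n\to X$ ($[0,1]^0=\{0\}$), $\mathcal K_n(X)$ the free $\mathcal R$-module on $\mathcal S_n(X)$, $\mathcal K_{-1}(X)=0$. Boundary: for $n\ge1$, $\partial_n(T)=\sum_{j=1}^n(-1)^{j+1}(a\langle T\rangle_{n,0,j}+b\langle T\rangle_{n,1,j})$ where $\langle T\rangle_{n,i,j}(x_1,\dots,x_{n-1})=T(x_1,\dots,x_{j-1},i,x_j,\dots,x_{n-1})$ ($\langle T\rangle_{1,i,1}(0)=T(i)$), extended linearly, $\partial_0=0$; ${}_{\vec m}\mathcal H_n(X)=\ker\partial_n/\operatorname{im}\partial_{n+1}$ and $[u]$ is the class of a cycle $u$. Subdivision maps ($\mathcal R$-linear): $\mathcal{SD}_0(T)=-T$ and for $n\ge1$, $\mathcal{SD}_n(T)=\sum_{\vec e\in\{0,2\}^n}\sum_{\vec v\in\mathcal V_{\vec e,n}}(-\prod_iv_i)\,T\circ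 h_{\vec e,\vec v}$, where $\mathcal V_{\vec e,n}$ is the set of $\vec v\in\{-1,1\}^n$ with $v_i=1$ whenever $e_i=0$, and $h_{\vec e,\vec v}(x)_i=\frac13(e_i+v_ix_i)$. *)

theory Defs
  imports "HOL-Analysis.Analysis"
begin

text \<open>Points of [0,1]^n are encoded as functions nat => real, coordinates x_1..x_n
  being x 0 .. x (n-1), all further coordinates being 0. [0,1]^0 = {0}.\<close>

definition cube :: "nat \<Rightarrow> (nat \<Rightarrow> real) set" where
  "cube n = {x. (\<forall>i<n. 0 \<le> x i \<and> x i \<le> 1) \<and> (\<forall>i\<ge>n. x i = 0)}"

definition cube_top :: "nat \<Rightarrow> (nat \<Rightarrow> real) topology" where
  "cube_top n = subtopology (powertop_real UNIV) (cube n)"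

definition sing_cubes :: "nat \<Rightarrow> 'a topology \<Rightarrow> ((nat \<Rightarrow> real) \<Rightarrow> 'a) set" where
  "sing_cubes n X = {T. continuous_map (cube_top n) X T \<and> T \<in> extensional (cube n)}"

text \<open>Chains K_n(X): finitely supported coefficient functions on S_n(X) (free R-module).\<close>

type_synonym ('a,'r) chain = "((nat \<Rightarrow> real) \<Rightarrow> 'a) \<Rightarrow> 'r"

definition is_chain :: "'a topology \<Rightarrow> nat \<Rightarrow> ('a,'r::comm_ring_1) chain \<Rightarrow> bool" where
  "is_chain X n c \<longleftrightarrow> finite {T. c T \<noteq> 0} \<and> (\<forall>T. c T \<noteq> 0 \<longrightarrow> T \<in> sing_cubes n X)"

definition basis_chain :: "((nat \<Rightarrow> real) \<Rightarrow> 'a) \<Rightarrow> ('a,'r::comm_ring_1) chain" where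
  "basis_chain T = (\<lambda>S. if S = T then 1 else 0)"

definition lin_ext :: "(((nat \<Rightarrow> real) \<Rightarrow> 'a) \<Rightarrow> ('a,'r::comm_ring_1) chain)
     \<Rightarrow> ('a,'r) chain \<Rightarrow> ('a,'r) chain" where
  "lin_ext g c = (\<lambda>S. \<Sum>T\<in>{T. c T \<noteq> 0}. c T * g T S)"

definition smult_chain :: "'r::comm_ring_1 \<Rightarrow> ('a,'r) chain \<Rightarrow> ('a,'r) chain" where
  "smult_chain r c = (\<lambda>S. r * c S)"

text \<open>Face <T>_{n,i,j} (j = 1..n): insert the value i at coordinate position j.\<close>

definition face :: "nat \<Rightarrow> real \<Rightarrow> nat \<Rightarrow> ((nat \<Rightarrow> real) \<Rightarrow> 'a) \<Rightarrow> ((nat \<Rightarrow> real) \<Rightarrow> 'a)" where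
  "face n i j T = restrict (\<lambda>x. T (\<lambda>k. if k < j - 1 then x k else if k = j - 1 then i else x (k - 1)))
                      (cube (n - 1))"

definition bd_cube :: "'r::comm_ring_1 \<Rightarrow> 'r \<Rightarrow> nat \<Rightarrow> ((nat \<Rightarrow> real) \<Rightarrow> 'a) \<Rightarrow> ('a,'r) chain" where
  "bd_cube a b n T = (\<lambda>S. \<Sum>j\<in>{1..n}. (-1) ^ (j + 1) *
      (a * basis_chain (face n 0 j T) S + b * basis_chain (face n 1 j T) S))"

definition bd :: "'r::comm_ring_1 \<Rightarrow> 'r \<Rightarrow> nat \<Rightarrow> ('a,'r) chain \<Rightarrow> ('a,'r) chain" where
  "bd a b n c = (if n = 0 then (\<lambda>_. 0) else lin_ext (bd_cube a b n) c)"

definition hclass :: "'a topology \<Rightarrow> 'r::comm_ring_1 \<Rightarrow> 'r \<Rightarrow> nat \<Rightarrow> ('a,'r) chain \<Rightarrow> ('a,'r) chain set" where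
  "hclass X a b n u = {(\<lambda>S. u S + w S) | w. \<exists>c. is_chain X (Suc n) c \<and> w = bd a b (Suc n) c}"

definition hmap :: "nat \<Rightarrow> (nat \<Rightarrow> int) \<Rightarrow> (nat \<Rightarrow> int) \<Rightarrow> (nat \<Rightarrow> real) \<Rightarrow> (nat \<Rightarrow> real)" where
  "hmap n e v x = (\<lambda>i. if i < n then (real_of_int (e i) + real_of_int (v i) * x i) / 3 else 0)"

definition Vset :: "nat \<Rightarrow> (nat \<Rightarrow> int) \<Rightarrow> (nat \<Rightarrow> int) set" where
  "Vset n e = {v \<in> {..<n} \<rightarrow>\<^sub>E {-1, 1}. \<forall>i<n. e i = 0 \<longrightarrow> v i = 1}"

definition SD_cube :: "nat \<Rightarrow> ((nat \<Rightarrow> real) \<Rightarrow> 'a) \<Rightarrow> ('a,'r::comm_ring_1) chain" where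
  "SD_cube n T = (if n = 0 then (\<lambda>S. - basis_chain T S)
     else (\<lambda>S. \<Sum>e\<in>{..<n} \<rightarrow>\<^sub>E {0, 2}. \<Sum>v\<in>Vset n e.
            (- (\<Prod>i<n. of_int (v i))) * basis_chain (restrict (T \<circ> hmap n e v) (cube n)) S))"

definition SD :: "nat \<Rightarrow> ('a,'r::comm_ring_1) chain \<Rightarrow> ('a,'r) chain" where
  "SD n c = lin_ext (SD_cube n) c"

end

theory Submission
  imports Defs "HOL-Library.Function_Algebras"
begin

definition fs :: "('a,'r::comm_ring_1) chain \<Rightarrow> bool" where
  "fs c \<longleftrightarrow> finite {T. c T \<noteq> 0}"

lemma lin_ext_superset:
  assumes "finite A" "{T. c T \<noteq> 0} \<subseteq> A"
  shows "lin_ext g c = (\<lambda>S. \<Sum>T\<in>A. c T * g T S)"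
  unfolding lin_ext_def using assms by (intro ext sum.mono_neutral_left) auto

lemma fs_add: "fs c \<Longrightarrow> fs d \<Longrightarrow> fs (c + d)"
  unfolding fs_def by (rule finite_subset[of _ "{T. c T \<noteq> 0} \<union> {T. d T \<noteq> 0}"]) auto

lemma fs_smult: "fs c \<Longrightarrow> fs (smult_chain r c)"
  unfolding fs_def smult_chain_def by (rule finite_subset[of _ "{T. c T \<noteq> 0}"]) auto

lemma fs_zero: "fs (\<lambda>_. 0)" unfolding fs_def by simp

lemma fs_basis: "fs (basis_chain T)"
  unfolding fs_def basis_chain_def by (rule finite_subset[of _ "{T}"]) auto

lemma lin_ext_add:
  assumes "fs c" "fs d" shows "lin_ext g (c + d) = lin_ext g c + lin_ext g d"
proof -
  let ?A = "{T. c T \<noteq> 0} \<union> {T. d T \<noteq> 0}"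
  have f: "finite ?A" using assms unfolding fs_def by auto
  show ?thesis
    apply (subst lin_ext_superset[OF f, of "c+d"], force)
    apply (subst lin_ext_superset[OF f, of c], force)
    apply (subst lin_ext_superset[OF f, of d], force)
    by (auto simp: sum.distrib distrib_right)
qed

lemma lin_ext_smult:
  assumes "fs c" shows "lin_ext g (smult_chain r c) = smult_chain r (lin_ext g c)"
proof -
  have f: "finite {T. c T \<noteq> 0}" using assms unfolding fs_def by auto
  show ?thesis
    apply (subst lin_ext_superset[OF f, of "smult_chain r c"], force simp: smult_chain_def)
    apply (subst lin_ext_superset[OF f, of c], force)
    by (auto simp: smult_chain_def sum_distrib_left mult.assoc)
qed

lemma lin_ext_zero: "lin_ext g (\<lambda>_. 0) = (\<lambda>_. 0)"
  unfolding lin_ext_def by simp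

lemma lin_ext_basis: "lin_ext g (basis_chain T) = g T"
  by (subst lin_ext_superset[of "{T}"]) (auto simp: basis_chain_def)

lemma lin_ext_self: "fs c \<Longrightarrow> lin_ext basis_chain c = c"
  unfolding lin_ext_def basis_chain_def fs_def
  by (auto intro!: ext simp: if_distrib cong: if_cong)

lemma lin_ext_fun_add: "lin_ext (\<lambda>T. g T + h T) c = lin_ext g c + lin_ext h c"
  unfolding lin_ext_def by (auto intro!: ext simp: sum.distrib distrib_left)

lemma lin_ext_fun_smult: "lin_ext (\<lambda>T. smult_chain r (g T)) c = smult_chain r (lin_ext g c)"
  unfolding lin_ext_def smult_chain_def by (auto intro!: ext simp: sum_distrib_left mult.left_commute)

lemma lin_ext_fun_zero: "lin_ext (\<lambda>T. (\<lambda>_. 0)) c = (\<lambda>_. 0)"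
  unfolding lin_ext_def by simp

lemma lin_ext_cong: "(\<And>T. c T \<noteq> 0 \<Longrightarrow> g T = h T) \<Longrightarrow> lin_ext g c = lin_ext h c"
  unfolding lin_ext_def by (auto intro!: ext sum.cong)

lemma fs_sum: "finite I \<Longrightarrow> (\<And>i. i \<in> I \<Longrightarrow> fs (f i)) \<Longrightarrow> fs (\<lambda>S. \<Sum>i\<in>I. f i S)"
proof (induction I rule: finite_induct)
  case empty then show ?case by (simp add: fs_zero)
next
  case (insert x F)
  have "fs (f x + (\<lambda>S. \<Sum>i\<in>F. f i S))" using insert by (intro fs_add) auto
  then show ?case using insert by (simp add: plus_fun_def)
qed

lemma lin_ext_sum:
  "finite I \<Longrightarrow> (\<And>i. i \<in> I \<Longrightarrow> fs (f i)) \<Longrightarrow>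
    lin_ext h (\<lambda>S. \<Sum>i\<in>I. f i S) = (\<lambda>S. \<Sum>i\<in>I. lin_ext h (f i) S)"
proof (induction I rule: finite_induct)
  case empty then show ?case by (simp add: lin_ext_zero)
next
  case (insert x F)
  have e: "(\<lambda>S. \<Sum>i\<in>insert x F. f i S) = f x + (\<lambda>S. \<Sum>i\<in>F. f i S)"
    using insert by (auto simp: plus_fun_def)
  show ?case unfolding e using insert
    by (subst lin_ext_add) (auto intro!: fs_sum simp: plus_fun_def)
qed

lemma fs_lin_ext: "fs c \<Longrightarrow> (\<And>T. fs (g T)) \<Longrightarrow> fs (lin_ext g c)"
  unfolding lin_ext_def fs_def[of c]
  by (rule fs_sum) (auto intro: fs_smult[unfolded smult_chain_def])

lemma lin_ext_compose:
  assumes "fs c" "\<And>T. fs (g T)"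
  shows "lin_ext h (lin_ext g c) = lin_ext (\<lambda>T. lin_ext h (g T)) c"
proof -
  have f: "finite {T. c T \<noteq> 0}" using assms unfolding fs_def by auto
  have "lin_ext h (lin_ext g c) = (\<lambda>S. \<Sum>T\<in>{T. c T \<noteq> 0}. lin_ext h (smult_chain (c T) (g T)) S)"
    unfolding lin_ext_def[of g c]
    by (subst lin_ext_sum) (auto simp: f assms fs_smult[unfolded smult_chain_def] smult_chain_def)
  also have "\<dots> = lin_ext (\<lambda>T. lin_ext h (g T)) c"
    unfolding lin_ext_def[of _ c] using assms
    using lin_ext_smult[of "g T" h "c T" for T] by (simp add: smult_chain_def)
  finally show ?thesis .
qed


datatype fac = Pt real | Af real real | Bl real real real real

fun fdim :: "fac \<Rightarrow> nat" where
  "fdim (Pt _) = 0" | "fdim (Af _ _) = 1" | "fdim (Bl _ _ _ _) = 2"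

definition wdim :: "fac list \<Rightarrow> nat" where "wdim w = sum_list (map fdim w)"

lemma wdim_Nil[simp]: "wdim [] = 0" and wdim_Cons[simp]: "wdim (f#w) = fdim f + wdim w"
  by (auto simp: wdim_def)

definition lsum :: "('w \<Rightarrow> 'r::comm_ring_1) \<Rightarrow> ('r \<times> 'w) list \<Rightarrow> 'r" where
  "lsum G L = sum_list (map (\<lambda>(c,w). c * G w) L)"

lemma lsum_Nil[simp]: "lsum G [] = 0"
  and lsum_Cons[simp]: "lsum G ((c,w)#L) = c * G w + lsum G L"
  and lsum_append[simp]: "lsum G (L1 @ L2) = lsum G L1 + lsum G L2"
  by (auto simp: lsum_def)

lemma lsum_concat: "lsum G (concat Ls) = sum_list (map (lsum G) Ls)"
  by (induction Ls) auto

lemma lsum_add_fun: "lsum (\<lambda>w. G w + H w) L = lsum G L + lsum H L"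
  by (induction L) (auto simp: algebra_simps)
lemma lsum_diff_fun: "lsum (\<lambda>w. G w - H w) L = lsum G L - lsum H L"
  by (induction L) (auto simp: algebra_simps)
lemma lsum_mult_fun: "lsum (\<lambda>w. r * G w) L = r * lsum G L"
  by (induction L) (auto simp: algebra_simps)
lemma lsum_minus_fun: "lsum (\<lambda>w. - G w) L = - lsum G L"
  by (induction L) (auto simp: algebra_simps)
lemma lsum_zero_fun: "lsum (\<lambda>w. 0) L = 0"
  by (induction L) (auto simp: algebra_simps)
lemma lsum_sum_fun: "lsum (\<lambda>w. \<Sum>i\<in>I. F i w) L = (\<Sum>i\<in>I. lsum (F i) L)"
  by (induction L) (auto simp: algebra_simps sum.distrib sum_distrib_left)
lemma lsum_swap: "lsum (\<lambda>x. lsum (\<lambda>y. H x y) B) A = lsum (\<lambda>y. lsum (\<lambda>x. H x y) A) B"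
  by (induction A) (auto simp: lsum_add_fun lsum_mult_fun lsum_zero_fun)
lemma lsum_cong: "(\<And>c w. (c,w) \<in> set L \<Longrightarrow> G w = H w) \<Longrightarrow> lsum G L = lsum H L"
  unfolding lsum_def by (intro arg_cong[where f=sum_list] map_cong) auto

definition smul :: "'r::comm_ring_1 \<Rightarrow> ('r \<times> 'w) list \<Rightarrow> ('r \<times> 'w) list" where
  "smul r L = map (\<lambda>(c,w). (r*c, w)) L"

lemma lsum_smul[simp]: "lsum G (smul r L) = r * lsum G L"
  by (induction L) (auto simp: smul_def algebra_simps)

definition lext :: "('w \<Rightarrow> ('r::comm_ring_1 \<times> 'v) list) \<Rightarrow> ('r \<times> 'w) list \<Rightarrow> ('r \<times> 'v) list" where
  "lext F L = concat (map (\<lambda>(c,w). smul c (F w)) L)"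

lemma lsum_lext[simp]: "lsum G (lext F L) = lsum (\<lambda>w. lsum G (F w)) L"
  by (induction L) (auto simp: lext_def)

lemma lext_append[simp]: "lext F (L1 @ L2) = lext F L1 @ lext F L2"
  by (simp add: lext_def)

definition pre :: "('r::comm_ring_1 \<times> fac) list \<Rightarrow> ('r \<times> fac list) list \<Rightarrow> ('r \<times> fac list) list" where
  "pre X Y = concat (map (\<lambda>(c,f). map (\<lambda>(d,u). (c*d, f#u)) Y) X)"

lemma lsum_pre[simp]: "lsum G (pre X Y) = lsum (\<lambda>f. lsum (\<lambda>u. G (f#u)) Y) X"
proof (induction X)
  case Nil then show ?case by (simp add: pre_def)
next
  case (Cons x X)
  obtain c f where x: "x = (c,f)" by force
  have "lsum G (map (\<lambda>(d,u). (c*d, f#u)) Y) = c * lsum (\<lambda>u. G (f#u)) Y"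
    by (induction Y) (auto simp: algebra_simps)
  then show ?case using Cons by (simp add: pre_def x)
qed

definition sg :: "('r::comm_ring_1 \<times> fac) list \<Rightarrow> ('r \<times> fac) list" where
  "sg X = map (\<lambda>(c,f). ((-1)^fdim f * c, f)) X"

lemma lsum_sg[simp]: "lsum G (sg X) = lsum (\<lambda>f. (-1)^fdim f * G f) X"
  by (induction X) (auto simp: sg_def algebra_simps)

lemma lsum_sg_const: "(\<And>c f. (c,f) \<in> set X \<Longrightarrow> fdim f = d) \<Longrightarrow> lsum G (sg X) = (-1)^d * lsum G X"
  unfolding lsum_sg lsum_mult_fun[symmetric] by (rule lsum_cong) auto

fun ffc :: "nat \<Rightarrow> real \<Rightarrow> fac \<Rightarrow> fac" where
  "ffc p i (Pt r) = Pt r"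
| "ffc p i (Af \<alpha> \<beta>) = Pt (\<alpha> + \<beta> * i)"
| "ffc p i (Bl c00 c10 c01 c11) = (if p = 0
      then Af ((1-i)*c00 + i*c10) ((1-i)*(c01-c00) + i*(c11-c10))
      else Af ((1-i)*c00 + i*c01) ((1-i)*(c10-c00) + i*(c11-c01)))"

fun wface :: "nat \<Rightarrow> real \<Rightarrow> fac list \<Rightarrow> fac list" where
  "wface p i [] = []"
| "wface p i (f#w) = (if p < fdim f then ffc p i f # w else f # wface (p - fdim f) i w)"

definition fbd1 :: "'r::comm_ring_1 \<Rightarrow> 'r \<Rightarrow> fac \<Rightarrow> ('r \<times> fac) list" where
  "fbd1 a b f = concat (map (\<lambda>j. [((-1)^(j+1)*a, ffc (j-1) 0 f), ((-1)^(j+1)*b, ffc (j-1) 1 f)])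
      [1..<Suc (fdim f)])"

definition fbdw :: "'r::comm_ring_1 \<Rightarrow> 'r \<Rightarrow> fac list \<Rightarrow> ('r \<times> fac list) list" where
  "fbdw a b w = concat (map (\<lambda>j. [((-1)^(j+1)*a, wface (j-1) 0 w), ((-1)^(j+1)*b, wface (j-1) 1 w)])
      [1..<Suc (wdim w)])"

definition fbd :: "'r::comm_ring_1 \<Rightarrow> 'r \<Rightarrow> ('r \<times> fac list) list \<Rightarrow> ('r \<times> fac list) list" where
  "fbd a b L = lext (fbdw a b) L"

fun insw :: "nat \<Rightarrow> real \<Rightarrow> fac list \<Rightarrow> fac list" where
  "insw 0 r u = Pt r # u"
| "insw (Suc p) r [] = [Pt r]"
| "insw (Suc p) r (f#u) = f # insw p r u"

definition Fcw :: "'r::comm_ring_1 \<Rightarrow> 'r \<Rightarrow> fac list \<Rightarrow> ('r \<times> fac list) list" where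
  "Fcw a b u = concat (map (\<lambda>j. [((-1)^j*a, insw j 0 u), ((-1)^j*b, insw j 1 u)]) [0..<Suc (length u)])"

definition Fc :: "'r::comm_ring_1 \<Rightarrow> 'r \<Rightarrow> ('r \<times> fac list) list \<Rightarrow> ('r \<times> fac list) list" where
  "Fc a b L = lext (Fcw a b) L"

lemma sum_list_upt1: "sum_list (map F [1..<Suc n]) = (\<Sum>j\<in>{1..n}. F j)"
proof -
  have "sum_list (map F [1..<Suc n]) = sum F (set [1..<Suc n])"
    by (simp only: sum_set_upt_conv_sum_list_nat)
  then show ?thesis by (simp only: set_upt atLeastLessThanSuc_atLeastAtMost)
qed

lemma sum_list_upt0: "sum_list (map F [0..<n]) = (\<Sum>j<n. F j)"
proof -
  have "sum_list (map F [0..<n]) = sum F (set [0..<n])"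
    by (simp only: sum_set_upt_conv_sum_list_nat)
  then show ?thesis by (simp only: set_upt lessThan_atLeast0)
qed

lemma lsum_fbd1: "lsum G (fbd1 a b f) =
   (\<Sum>j\<in>{1..fdim f}. (-1)^(j+1) * (a * G (ffc (j-1) 0 f) + b * G (ffc (j-1) 1 f)))"
  unfolding fbd1_def lsum_concat map_map o_def sum_list_upt1 by (simp add: algebra_simps)

lemma lsum_fbdw: "lsum G (fbdw a b w) =
   (\<Sum>j\<in>{1..wdim w}. (-1)^(j+1) * (a * G (wface (j-1) 0 w) + b * G (wface (j-1) 1 w)))"
  unfolding fbdw_def lsum_concat map_map o_def sum_list_upt1 by (simp add: algebra_simps)

lemma lsum_Fcw: "lsum G (Fcw a b u) =
   (\<Sum>j<Suc (length u). (-1)^j * (a * G (insw j 0 u) + b * G (insw j 1 u)))"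
  unfolding Fcw_def lsum_concat map_map o_def sum_list_upt0 by (simp add: algebra_simps)

lemma lsum_fbdw_Cons: "lsum G (fbdw a b (f#u)) =
   lsum (\<lambda>g. G (g#u)) (fbd1 a b f) + (-1)^fdim f * lsum (\<lambda>w. G (f#w)) (fbdw a b u)"
proof -
  let ?d = "fdim f" and ?m = "wdim u"
  let ?F = "\<lambda>j. (-1)^(j+1) * (a * G (wface (j-1) 0 (f#u)) + b * G (wface (j-1) 1 (f#u)))"
  have "{1..?d + ?m} = {1..?d} \<union> {?d+1..?m+?d}" by auto
  then have "(\<Sum>j\<in>{1..?d + ?m}. ?F j) = (\<Sum>j\<in>{1..?d}. ?F j) + (\<Sum>j\<in>{1+?d..?m+?d}. ?F j)"
    by (simp add: sum.union_disjoint add.commute)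
  also have "(\<Sum>j\<in>{1..?d}. ?F j) = lsum (\<lambda>g. G (g#u)) (fbd1 a b f)"
    unfolding lsum_fbd1 by (intro sum.cong) auto
  also have "(\<Sum>j\<in>{1+?d..?m+?d}. ?F j) = (\<Sum>j\<in>{1..?m}. ?F (j + ?d))"
    by (rule sum.shift_bounds_cl_nat_ivl)
  also have "\<dots> = (-1)^?d * lsum (\<lambda>w. G (f#w)) (fbdw a b u)"
    unfolding lsum_fbdw sum_distrib_left
    by (intro sum.cong) (auto simp: power_add algebra_simps)
  finally show ?thesis by (simp add: lsum_fbdw)
qed

lemma lsum_Fcw_Cons: "lsum G (Fcw a b (f#u)) =
   a * G (Pt 0 # f # u) + b * G (Pt 1 # f # u) - lsum (\<lambda>w. G (f#w)) (Fcw a b u)"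
  unfolding lsum_Fcw
  apply (subst sum.lessThan_Suc_shift)
  apply (simp add: sum_negf[symmetric] sum.distrib[symmetric] algebra_simps)
  done

definition feq :: "('r::comm_ring_1 \<times> 'w) list \<Rightarrow> ('r \<times> 'w) list \<Rightarrow> bool" where
  "feq L1 L2 \<longleftrightarrow> (\<forall>G. lsum G L1 = lsum G L2)"

lemma lsum_fbd_pre: "lsum G (fbd a b (pre X Y)) =
    lsum G (pre (lext (fbd1 a b) X) Y) + lsum G (pre (sg X) (fbd a b Y))"
  unfolding fbd_def
  by (simp add: lsum_fbdw_Cons lsum_add_fun lsum_mult_fun lsum_swap[of _ _ "fbd1 a b _"])

definition dpt :: "'r::comm_ring_1 \<Rightarrow> 'r \<Rightarrow> ('r \<times> fac) list" where
  "dpt a b = [(a, Pt 0), (b, Pt 1)]"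

lemma lsum_Fc_pre: "lsum G (Fc a b (pre X Y)) =
    lsum G (pre (dpt a b) (pre X Y)) - lsum G (pre X (Fc a b Y))"
  unfolding Fc_def dpt_def
  by (simp add: lsum_Fcw_Cons lsum_add_fun lsum_diff_fun lsum_mult_fun algebra_simps)


definition I1 :: "('r::comm_ring_1 \<times> fac) list" where "I1 = [(1, Af 0 1)]"
definition S1 :: "('r::comm_ring_1 \<times> fac) list" where
  "S1 = [(1, Af 0 (1/3)), (-1, Af (2/3) (-1/3)), (1, Af (2/3) (1/3))]"
definition Ka :: "('r::comm_ring_1 \<times> fac) list" where
  "Ka = [(1, Bl 0 (1/3) 1 1), (1, Bl (2/3) 1 (1/3) 1)]"
definition Kb :: "('r::comm_ring_1 \<times> fac) list" where
  "Kb = [(1, Bl 0 0 (2/3) 1), (1, Bl 0 (2/3) 0 (1/3))]"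

lemma two_ivl: "{1..2::nat} = {1,2}" by auto

lemma lsum_fbd1_Af[simp]: "lsum G (fbd1 a b (Af \<alpha> \<beta>)) = a * G (Pt \<alpha>) + b * G (Pt (\<alpha>+\<beta>))"
  unfolding lsum_fbd1 by simp

lemma lsum_fbd1_Bl[simp]: "lsum G (fbd1 a b (Bl c00 c10 c01 c11)) =
   a * G (Af c00 (c01-c00)) + b * G (Af c10 (c11-c10)) - a * G (Af c00 (c10-c00)) - b * G (Af c01 (c11-c01))"
  unfolding lsum_fbd1 fdim.simps two_ivl by (simp add: algebra_simps)

lemma fbd1_S1: "lsum G (lext (fbd1 a b) S1) = lsum G (dpt a b)"
  by (simp add: S1_def dpt_def algebra_simps)

lemma fbd1_I1: "lsum G (lext (fbd1 a b) I1) = lsum G (dpt a b)"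
  by (simp add: I1_def dpt_def algebra_simps)

lemma fbd1_Ka: "lsum G (lext (fbd1 a b) Ka) = a * (lsum G I1 - lsum G S1)"
  by (simp add: Ka_def I1_def S1_def algebra_simps)

lemma fbd1_Kb: "lsum G (lext (fbd1 a b) Kb) = b * (lsum G I1 - lsum G S1)"
  by (simp add: Kb_def I1_def S1_def algebra_simps)

primrec pw :: "('r::comm_ring_1 \<times> fac) list \<Rightarrow> nat \<Rightarrow> ('r \<times> fac list) list" where
  "pw X 0 = [(1,[])]"
| "pw X (Suc n) = pre X (pw X n)"

primrec Pm :: "('r::comm_ring_1 \<times> fac) list \<Rightarrow> nat \<Rightarrow> ('r \<times> fac list) list" where
  "Pm K 0 = []"
| "Pm K (Suc n) = pre K (pw I1 n) @ smul (-1) (pre S1 (Pm K n))"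

lemma lsum_fbd_Nil: "lsum G (fbd a b [(1,[])]) = 0"
  by (simp add: fbd_def lsum_fbdw)

lemma lsum_Fc_Nil: "lsum G (Fc a b [(1,[])]) = a * G [Pt 0] + b * G [Pt 1]"
  by (simp add: Fc_def lsum_Fcw)

lemma lsum_fbd_append: "lsum G (fbd a b (L1 @ L2)) = lsum G (fbd a b L1) + lsum G (fbd a b L2)"
  by (simp add: fbd_def)
lemma lsum_fbd_smul: "lsum G (fbd a b (smul r L)) = r * lsum G (fbd a b L)"
  by (simp add: fbd_def)
lemma lsum_Fc_append: "lsum G (Fc a b (L1 @ L2)) = lsum G (Fc a b L1) + lsum G (Fc a b L2)"
  by (simp add: Fc_def)
lemma lsum_Fc_smul: "lsum G (Fc a b (smul r L)) = r * lsum G (Fc a b L)"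
  by (simp add: Fc_def)
lemma lsum_Fc_empty: "lsum G (Fc a b []) = 0"
  by (simp add: Fc_def lext_def)
lemma lsum_fbd_empty: "lsum G (fbd a b []) = 0"
  by (simp add: fbd_def lext_def)

lemma fbd_pw:
  assumes X: "\<And>G. lsum G (lext (fbd1 a b) X) = lsum G (dpt a b)"
    and X1: "\<And>c f. (c,f) \<in> set X \<Longrightarrow> fdim f = 1"
  shows "lsum G (fbd a b (pw X (Suc n))) = lsum G (Fc a b (pw X n))"
proof (induction n arbitrary: G)
  case 0
  have "lsum G (fbd a b (pw X (Suc 0))) =
     lsum G (pre (lext (fbd1 a b) X) [(1,[])]) + lsum G (pre (sg X) (fbd a b [(1,[])]))"
    by (simp only: pw.simps lsum_fbd_pre)
  also have "lsum G (pre (sg X) (fbd a b [(1,[])])) = 0"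
    by (simp only: lsum_pre lsum_fbd_Nil lsum_zero_fun)
  also have "lsum G (pre (lext (fbd1 a b) X) [(1,[])]) = lsum (\<lambda>f. G [f]) (dpt a b)"
    by (simp only: lsum_pre X) simp
  finally show ?case by (simp add: lsum_Fc_Nil dpt_def)
next
  case (Suc n)
  have "lsum G (fbd a b (pw X (Suc (Suc n)))) =
     lsum G (pre (lext (fbd1 a b) X) (pw X (Suc n))) + lsum G (pre (sg X) (fbd a b (pw X (Suc n))))"
    by (simp only: pw.simps(2)[of X "Suc n"] lsum_fbd_pre)
  also have "lsum G (pre (lext (fbd1 a b) X) (pw X (Suc n))) = lsum G (pre (dpt a b) (pw X (Suc n)))"
    by (simp only: lsum_pre X)
  also have "lsum G (pre (sg X) (fbd a b (pw X (Suc n)))) = - lsum G (pre X (Fc a b (pw X n)))"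
    by (simp only: lsum_pre Suc.IH lsum_sg_const[OF X1]) simp
  also have "lsum G (pre (dpt a b) (pw X (Suc n))) + - lsum G (pre X (Fc a b (pw X n))) =
      lsum G (Fc a b (pw X (Suc n)))"
    by (simp only: pw.simps(2)[of X n] lsum_Fc_pre) simp
  finally show ?case .
qed

lemma fbd_Pm:
  assumes K: "\<And>G. lsum G (lext (fbd1 a b) K) = lam * (lsum G I1 - lsum G S1)"
    and K2: "\<And>c f. (c,f) \<in> set K \<Longrightarrow> fdim f = 2"
  shows "lsum G (fbd a b (Pm K (Suc n))) =
     lam * (lsum G (pw I1 (Suc n)) - lsum G (pw S1 (Suc n))) - lsum G (Fc a b (Pm K n))"
proof (induction n arbitrary: G)
  case 0
  have "lsum G (fbd a b (Pm K (Suc 0))) =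
     lsum G (pre (lext (fbd1 a b) K) [(1,[])]) + lsum G (pre (sg K) (fbd a b [(1,[])]))
     - lsum G (fbd a b (pre S1 []))"
    by (simp only: Pm.simps pw.simps lsum_fbd_append lsum_fbd_smul lsum_fbd_pre) simp
  also have "lsum G (pre (sg K) (fbd a b [(1,[])])) = 0"
    by (simp only: lsum_pre lsum_fbd_Nil lsum_zero_fun)
  also have "lsum G (fbd a b (pre S1 [])) = 0"
    by (simp add: fbd_def lsum_zero_fun)
  also have "lsum G (pre (lext (fbd1 a b) K) [(1,[])]) =
       lam * (lsum (\<lambda>f. G [f]) I1 - lsum (\<lambda>f. G [f]) S1)"
    by (simp only: lsum_pre K) simp
  finally show ?case by (simp add: lsum_Fc_empty)
next
  case (Suc n)
  let ?A = "pw I1 n" and ?P = "Pm K n" and ?P' = "Pm K (Suc n)"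
  have I1: "\<And>G. lsum G (lext (fbd1 a b) I1) = lsum G (dpt a b)" "\<And>c f. (c,f) \<in> set I1 \<Longrightarrow> fdim f = 1"
    by (auto simp: fbd1_I1 I1_def dpt_def)
  have S1: "\<And>G. lsum G (lext (fbd1 a b) S1) = lsum G (dpt a b)" "\<And>c f. (c,f) \<in> set S1 \<Longrightarrow> fdim f = 1"
    by (auto simp: fbd1_S1 S1_def dpt_def)
  have e: "lsum G (fbd a b (Pm K (Suc (Suc n)))) =
      lsum G (fbd a b (pre K (pw I1 (Suc n)))) - lsum G (fbd a b (pre S1 ?P'))"
    by (simp only: Pm.simps(2)[of K "Suc n"] lsum_fbd_append lsum_fbd_smul) simp
  have T1: "lsum G (fbd a b (pre K (pw I1 (Suc n)))) =
      lam * (lsum G (pre I1 (pw I1 (Suc n))) - lsum G (pre S1 (pw I1 (Suc n))))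
      + lsum G (pre K (Fc a b ?A))"
    by (simp only: lsum_fbd_pre lsum_pre K lsum_sg_const[OF K2] fbd_pw[OF I1])
       (simp add: algebra_simps lsum_diff_fun lsum_mult_fun)
  have T2: "lsum G (fbd a b (pre S1 ?P')) =
      lsum G (pre (dpt a b) ?P') -
      (lam * (lsum G (pre S1 (pw I1 (Suc n))) - lsum G (pre S1 (pw S1 (Suc n))))
        - lsum G (pre S1 (Fc a b ?P)))"
    by (simp only: lsum_fbd_pre lsum_pre S1(1) lsum_sg_const[OF S1(2)] Suc.IH)
       (simp add: algebra_simps lsum_diff_fun lsum_mult_fun lsum_add_fun)
  have R: "lsum G (Fc a b ?P') = (lsum G (pre (dpt a b) (pre K ?A)) - lsum G (pre K (Fc a b ?A)))
      - (lsum G (pre (dpt a b) (pre S1 ?P)) - lsum G (pre S1 (Fc a b ?P)))"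
    by (simp only: Pm.simps(2)[of K n] lsum_Fc_append lsum_Fc_smul lsum_Fc_pre) simp
  have D: "lsum G (pre (dpt a b) ?P') = lsum G (pre (dpt a b) (pre K ?A)) - lsum G (pre (dpt a b) (pre S1 ?P))"
    by (simp only: Pm.simps(2)[of K n] lsum_pre lsum_append lsum_smul lsum_add_fun lsum_mult_fun) 
       (simp add: algebra_simps lsum_diff_fun lsum_mult_fun lsum_minus_fun)
  show ?case
    unfolding e T1 T2 R D pw.simps(2)[of _ "Suc n"]
    by (simp add: algebra_simps)
qed


fun feval :: "fac \<Rightarrow> (nat \<Rightarrow> real) \<Rightarrow> real" where
  "feval (Pt r) x = r"
| "feval (Af \<alpha> \<beta>) x = \<alpha> + \<beta> * x 0"
| "feval (Bl c00 c10 c01 c11) x = (1 - x 0) * ((1 - x 1) * c00 + x 1 * c01) + x 0 * ((1 - x 1) * c10 + x 1 * c11)"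

fun R :: "fac list \<Rightarrow> (nat \<Rightarrow> real) \<Rightarrow> (nat \<Rightarrow> real)" where
  "R [] x = (\<lambda>_. 0)"
| "R (f#w) x = (\<lambda>k. if k = 0 then feval f x else R w (\<lambda>i. x (i + fdim f)) (k - 1))"

definition insp :: "nat \<Rightarrow> real \<Rightarrow> (nat \<Rightarrow> real) \<Rightarrow> (nat \<Rightarrow> real)" where
  "insp p i x = (\<lambda>k. if k < p then x k else if k = p then i else x (k - 1))"

lemma feval_ffc: "p < fdim f \<Longrightarrow> feval (ffc p i f) x = feval f (insp p i x)"
  by (cases f) (auto simp: insp_def algebra_simps)

lemma fdim_ffc: "p < fdim f \<Longrightarrow> fdim (ffc p i f) = fdim f - 1"
  by (cases f) auto

lemma shift_ffc: "p < fdim f \<Longrightarrow> (\<lambda>j. x (j + fdim (ffc p i f))) = (\<lambda>j. insp p i x (j + fdim f))"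
  by (cases f) (auto simp: insp_def)

lemma feval_local: "fdim f \<le> p \<Longrightarrow> feval f (insp p i x) = feval f x"
  by (cases f) (auto simp: insp_def)

lemma shift_insp: "d \<le> p \<Longrightarrow> (\<lambda>j. insp p i x (j + d)) = insp (p - d) i (\<lambda>j. x (j + d))"
  by (auto simp: insp_def fun_eq_iff)

lemma wdim_wface: "p < wdim w \<Longrightarrow> wdim (wface p i w) = wdim w - 1"
  by (induction w arbitrary: p) (auto simp: fdim_ffc)

lemma length_wface: "length (wface p i w) = length w"
  by (induction w arbitrary: p) auto

lemma R_wface: "p < wdim w \<Longrightarrow> R (wface p i w) x = R w (insp p i x)"
proof (induction w arbitrary: p x)
  case Nil then show ?case by simp
next
  case (Cons f w)
  show ?case
  proof (cases "p < fdim f")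
    case True
    then show ?thesis by (auto simp: feval_ffc shift_ffc fun_eq_iff)
  next
    case False
    then have "p - fdim f < wdim w" using Cons.prems by simp
    then show ?thesis using False
      by (auto simp: feval_local Cons.IH shift_insp fun_eq_iff)
  qed
qed

lemma R_insw: "p \<le> length u \<Longrightarrow> R (insw p r u) x = insp p r (R u x)"
proof (induction u arbitrary: p x)
  case Nil then show ?case by (auto simp: insp_def fun_eq_iff)
next
  case (Cons f u)
  show ?case
  proof (cases p)
    case 0 then show ?thesis by (auto simp: insp_def fun_eq_iff)
  next
    case (Suc q)
    then have "q \<le> length u" using Cons.prems by simp
    then show ?thesis using Suc
      by (auto simp: Cons.IH insp_def fun_eq_iff)
  qed
qed

lemma wdim_insw: "wdim (insw p r u) = wdim u"
  by (induction p r u rule: insw.induct) auto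

lemma length_insw: "p \<le> length u \<Longrightarrow> length (insw p r u) = Suc (length u)"
  by (induction p r u rule: insw.induct) auto

fun fok :: "fac \<Rightarrow> bool" where
  "fok (Pt r) = (0 \<le> r \<and> r \<le> 1)"
| "fok (Af \<alpha> \<beta>) = (0 \<le> \<alpha> \<and> \<alpha> \<le> 1 \<and> 0 \<le> \<alpha> + \<beta> \<and> \<alpha> + \<beta> \<le> 1)"
| "fok (Bl c00 c10 c01 c11) = (0 \<le> c00 \<and> c00 \<le> 1 \<and> 0 \<le> c10 \<and> c10 \<le> 1 \<and>
     0 \<le> c01 \<and> c01 \<le> 1 \<and> 0 \<le> c11 \<and> c11 \<le> 1)"

definition wok :: "fac list \<Rightarrow> bool" where "wok w \<longleftrightarrow> (\<forall>f\<in>set w. fok f)"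

lemma conv01: "0 \<le> (t::real) \<Longrightarrow> t \<le> 1 \<Longrightarrow> 0 \<le> p \<Longrightarrow> p \<le> 1 \<Longrightarrow> 0 \<le> q \<Longrightarrow> q \<le> 1
   \<Longrightarrow> 0 \<le> (1 - t) * p + t * q \<and> (1 - t) * p + t * q \<le> 1"
proof -
  assume a: "0 \<le> t" "t \<le> 1" "0 \<le> p" "p \<le> 1" "0 \<le> q" "q \<le> 1"
  have "(1 - t) * p \<le> (1 - t) * 1" using a by (intro mult_left_mono) auto
  moreover have "t * q \<le> t * 1" using a by (intro mult_left_mono) auto
  ultimately show ?thesis using a by auto
qed

lemma feval_01:
  assumes "fok f" "\<And>i. i < fdim f \<Longrightarrow> 0 \<le> x i \<and> x i \<le> 1"
  shows "0 \<le> feval f x \<and> feval f x \<le> 1"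
proof (cases f)
  case (Pt r) then show ?thesis using assms by auto
next
  case (Af \<alpha> \<beta>)
  have e: "feval f x = (1 - x 0) * \<alpha> + x 0 * (\<alpha> + \<beta>)" using Af by (simp add: algebra_simps)
  show ?thesis using assms Af unfolding e by (intro conv01) auto
next
  case (Bl c00 c10 c01 c11)
  have x: "0 \<le> x 0" "x 0 \<le> 1" "0 \<le> x 1" "x 1 \<le> 1" using assms Bl by auto
  have p: "0 \<le> (1 - x 1) * c00 + x 1 * c01 \<and> (1 - x 1) * c00 + x 1 * c01 \<le> 1"
    using assms Bl x by (intro conv01) auto
  have q: "0 \<le> (1 - x 1) * c10 + x 1 * c11 \<and> (1 - x 1) * c10 + x 1 * c11 \<le> 1"
    using assms Bl x by (intro conv01) auto
  show ?thesis using Bl x p q by (simp only: feval.simps) (intro conv01, auto)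
qed

lemma R_cube: "wok w \<Longrightarrow> x \<in> cube (wdim w) \<Longrightarrow> R w x \<in> cube (length w)"
proof (induction w arbitrary: x)
  case Nil then show ?case by (simp add: cube_def)
next
  case (Cons f w)
  have sh: "(\<lambda>i. x (i + fdim f)) \<in> cube (wdim w)"
    using Cons.prems by (auto simp: cube_def)
  have r: "R w (\<lambda>i. x (i + fdim f)) \<in> cube (length w)"
    using Cons sh by (auto simp: wok_def)
  have f: "0 \<le> feval f x \<and> feval f x \<le> 1"
    using Cons.prems by (intro feval_01) (auto simp: wok_def cube_def)
  show ?case using r f unfolding cube_def
    by auto
qed

lemma insp_cube: "p \<le> m \<Longrightarrow> 0 \<le> i \<Longrightarrow> i \<le> 1 \<Longrightarrow> x \<in> cube m \<Longrightarrow> insp p i x \<in> cube (Suc m)"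
  by (auto simp: cube_def insp_def)

definition rlz :: "((nat \<Rightarrow> real) \<Rightarrow> 'a) \<Rightarrow> ('r::comm_ring_1 \<times> fac list) list \<Rightarrow> ('a,'r) chain" where
  "rlz T L = (\<lambda>S. lsum (\<lambda>w. basis_chain (restrict (T \<circ> R w) (cube (wdim w))) S) L)"

lemma rlz_Nil: "rlz T [] = (\<lambda>_. 0)" by (simp add: rlz_def)
lemma rlz_Cons: "rlz T ((c,w)#L) = smult_chain c (basis_chain (restrict (T \<circ> R w) (cube (wdim w)))) + rlz T L"
  by (simp add: rlz_def smult_chain_def plus_fun_def)
lemma rlz_append: "rlz T (L1 @ L2) = rlz T L1 + rlz T L2"
  by (simp add: rlz_def plus_fun_def)
lemma rlz_smul: "rlz T (smul r L) = smult_chain r (rlz T L)"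
  by (simp add: rlz_def smult_chain_def)
lemma rlz_feq: "(\<And>G. lsum G L1 = lsum G L2) \<Longrightarrow> rlz T L1 = rlz T L2"
  by (simp add: rlz_def)

lemma fs_rlz: "fs (rlz T L)"
  by (induction L) (auto simp: rlz_Nil rlz_Cons fs_zero intro!: fs_add fs_smult fs_basis)

lemma lin_ext_rlz: "lin_ext g (rlz T L) = (\<lambda>S. lsum (\<lambda>w. g (restrict (T \<circ> R w) (cube (wdim w))) S) L)"
proof (induction L)
  case Nil then show ?case by (simp add: rlz_Nil lin_ext_zero)
next
  case (Cons x L)
  obtain c w where x: "x = (c,w)" by force
  show ?case unfolding x rlz_Cons
    by (simp only: lin_ext_add[OF fs_smult[OF fs_basis] fs_rlz] lin_ext_smult[OF fs_basis] lin_ext_basis Cons)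
       (simp only: smult_chain_def plus_fun_def lsum_Cons)
qed

lemma face_rlz:
  assumes "1 \<le> j" "j \<le> wdim w" "i = 0 \<or> i = 1"
  shows "face (wdim w) i j (restrict (T \<circ> R w) (cube (wdim w))) =
         restrict (T \<circ> R (wface (j-1) i w)) (cube (wdim (wface (j-1) i w)))"
proof -
  have wd: "wdim (wface (j-1) i w) = wdim w - 1" using assms by (intro wdim_wface) auto
  have c: "\<And>x. x \<in> cube (wdim w - 1) \<Longrightarrow> insp (j-1) i x \<in> cube (wdim w)"
    using assms insp_cube[of "j-1" "wdim w - 1" i] by auto
  have e: "\<And>x. (\<lambda>k. if k < j - 1 then x k else if k = j - 1 then i else x (k - 1)) = insp (j-1) i x"
    by (simp only: insp_def)
  have r: "\<And>x. R (wface (j-1) i w) x = R w (insp (j-1) i x)"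
    using assms by (intro R_wface) auto
  show ?thesis
    unfolding face_def wd e
    apply (intro restrict_ext)
    using c r by auto
qed

lemma bd_rlz:
  assumes "1 \<le> m" "\<And>c w. (c,w) \<in> set L \<Longrightarrow> wdim w = m"
  shows "bd a b m (rlz T L) = rlz T (fbd a b L)"
proof -
  have "bd a b m (rlz T L) = (\<lambda>S. lsum (\<lambda>w. bd_cube a b m (restrict (T \<circ> R w) (cube (wdim w))) S) L)"
    using assms by (simp add: bd_def lin_ext_rlz)
  also have "\<dots> = (\<lambda>S. lsum (\<lambda>w. lsum (\<lambda>u. basis_chain (restrict (T \<circ> R u) (cube (wdim u))) S) (fbdw a b w)) L)"
  proof (intro ext lsum_cong)
    fix S c w assume "(c,w) \<in> set L"
    then have m: "wdim w = m" using assms by auto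
    show "bd_cube a b m (restrict (T \<circ> R w) (cube (wdim w))) S =
       lsum (\<lambda>u. basis_chain (restrict (T \<circ> R u) (cube (wdim u))) S) (fbdw a b w)"
      unfolding lsum_fbdw bd_cube_def m[symmetric]
      by (intro sum.cong refl) (simp add: face_rlz)
  qed
  also have "\<dots> = rlz T (fbd a b L)" by (simp add: rlz_def fbd_def)
  finally show ?thesis .
qed


lemma lin_ext_bd_cube: "lin_ext h (bd_cube a b n T) =
   (\<lambda>S. \<Sum>j\<in>{1..n}. (-1)^(j+1) * (a * h (face n 0 j T) S + b * h (face n 1 j T) S))"
proof -
  have e: "\<And>j. (\<lambda>S. (-1)^(j+1) * (a * basis_chain (face n 0 j T) S + b * basis_chain (face n 1 j T) S))
     = smult_chain ((-1)^(j+1)) (smult_chain a (basis_chain (face n 0 j T)) + smult_chain b (basis_chain (face n 1 j T)))"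
    by (simp add: smult_chain_def plus_fun_def)
  have f: "\<And>j. fs (smult_chain ((-1)^(j+1)) (smult_chain a (basis_chain (face n 0 j T)) + smult_chain b (basis_chain (face n 1 j T))))"
    by (intro fs_smult fs_add fs_basis)
  have l: "\<And>j. lin_ext h (\<lambda>S. (-1)^(j+1) * (a * basis_chain (face n 0 j T) S + b * basis_chain (face n 1 j T) S))
     = (\<lambda>S. (-1)^(j+1) * (a * h (face n 0 j T) S + b * h (face n 1 j T) S))"
    unfolding e
    by (simp only: lin_ext_smult[OF fs_add[OF fs_smult[OF fs_basis] fs_smult[OF fs_basis]]]
        lin_ext_add[OF fs_smult[OF fs_basis] fs_smult[OF fs_basis]] lin_ext_smult[OF fs_basis] lin_ext_basis)
       (simp add: smult_chain_def plus_fun_def)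
  show ?thesis
    unfolding bd_cube_def
    apply (subst lin_ext_sum)
      apply simp
     apply (simp only: e f)
    apply (simp only: l)
    done
qed

lemma face_insw:
  assumes "wok u" "length u = m" "1 \<le> j" "j \<le> Suc m" "i = 0 \<or> i = 1"
  shows "restrict (face (Suc m) i j T \<circ> R u) (cube (wdim u)) =
         restrict (T \<circ> R (insw (j-1) i u)) (cube (wdim (insw (j-1) i u)))"
proof -
  have "\<And>x. x \<in> cube (wdim u) \<Longrightarrow> face (Suc m) i j T (R u x) = T (R (insw (j-1) i u) x)"
  proof -
    fix x assume x: "x \<in> cube (wdim u)"
    have c: "R u x \<in> cube m" using R_cube[OF assms(1) x] assms by simp
    have e: "\<And>y. (\<lambda>k. if k < j - 1 then y k else if k = j - 1 then i else y (k - 1)) = insp (j-1) i y"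
      by (simp only: insp_def)
    show "face (Suc m) i j T (R u x) = T (R (insw (j-1) i u) x)"
      unfolding face_def e using c assms by (simp add: R_insw)
  qed
  then show ?thesis unfolding wdim_insw by (intro restrict_ext) auto
qed

lemma Fc_rlz:
  assumes Y: "\<And>c u. (c,u) \<in> set Y \<Longrightarrow> wok u \<and> length u = m"
  shows "lin_ext (\<lambda>T'. rlz T' Y) (bd_cube a b (Suc m) T) = rlz T (Fc a b Y)"
proof (rule ext)
  fix S
  let ?G = "\<lambda>u. basis_chain (restrict (T \<circ> R u) (cube (wdim u))) S"
  have r: "rlz (face (Suc m) i j T) Y S = lsum (\<lambda>u. ?G (insw (j-1) i u)) Y"
    if "1 \<le> j" "j \<le> Suc m" "i = 0 \<or> i = 1" for i j
    unfolding rlz_def using that Y by (intro lsum_cong) (simp add: face_insw)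
  have "lin_ext (\<lambda>T'. rlz T' Y) (bd_cube a b (Suc m) T) S =
     (\<Sum>j\<in>{1..Suc m}. (-1)^(j+1) * (a * lsum (\<lambda>u. ?G (insw (j-1) 0 u)) Y + b * lsum (\<lambda>u. ?G (insw (j-1) 1 u)) Y))"
    unfolding lin_ext_bd_cube by (intro sum.cong refl) (simp add: r)
  also have "\<dots> = (\<Sum>j<Suc m. (-1)^j * (a * lsum (\<lambda>u. ?G (insw j 0 u)) Y + b * lsum (\<lambda>u. ?G (insw j 1 u)) Y))"
    by (simp only: One_nat_def sum.atLeast1_atMost_eq) simp
  also have "\<dots> = lsum (\<lambda>u. \<Sum>j<Suc m. (-1)^j * (a * ?G (insw j 0 u) + b * ?G (insw j 1 u))) Y"
    by (simp add: lsum_sum_fun lsum_add_fun lsum_mult_fun)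
  also have "\<dots> = lsum (\<lambda>u. lsum ?G (Fcw a b u)) Y"
    using Y by (intro lsum_cong) (simp add: lsum_Fcw)
  also have "\<dots> = rlz T (Fc a b Y) S"
    by (simp add: rlz_def Fc_def)
  finally show "lin_ext (\<lambda>T'. rlz T' Y) (bd_cube a b (Suc m) T) S = rlz T (Fc a b Y) S" .
qed

lemma pw_I1: "pw I1 n = [(1, replicate n (Af 0 1))]"
  by (induction n) (auto simp: pre_def I1_def)

lemma R_Af_word: "(\<And>f. f \<in> set ws \<Longrightarrow> fdim f = 1) \<Longrightarrow>
   R ws x = (\<lambda>k. if k < length ws then feval (ws!k) (\<lambda>i. x (i + k)) else 0)"
proof (induction ws arbitrary: x)
  case Nil then show ?case by simp
next
  case (Cons f ws)
  then have f1: "fdim f = 1" by auto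
  have IH: "\<And>y. R ws y = (\<lambda>k. if k < length ws then feval (ws!k) (\<lambda>i. y (i + k)) else 0)"
    using Cons by auto
  show ?case
  proof (rule ext)
    fix k show "R (f#ws) x k = (if k < length (f#ws) then feval ((f#ws)!k) (\<lambda>i. x (i + k)) else 0)"
    proof (cases k)
      case 0 then show ?thesis by simp
    next
      case (Suc k')
      have "R (f#ws) x k = R ws (\<lambda>i. x (i+1)) k'" by (simp add: Suc f1)
      also have "\<dots> = (if k' < length ws then feval (ws!k') (\<lambda>i. x (i + k' + 1)) else 0)"
        by (simp only: IH)
      finally show ?thesis by (simp add: Suc)
    qed
  qed
qed

lemma wdim_Af_word: "(\<And>f. f \<in> set ws \<Longrightarrow> fdim f = 1) \<Longrightarrow> wdim ws = length ws"
  by (induction ws) auto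

lemma rlz_I:
  assumes "T \<in> extensional (cube n)"
  shows "rlz T (pw I1 n) = basis_chain T"
proof -
  have w: "wdim (replicate n (Af 0 1)) = n" by (subst wdim_Af_word) auto
  have r: "R (replicate n (Af 0 1)) x = (\<lambda>k. if k < n then x k else 0)" for x
    by (subst R_Af_word) auto
  have rr: "restrict (T \<circ> R (replicate n (Af 0 1))) (cube (wdim (replicate n (Af 0 1)))) = T"
  proof
    fix x show "restrict (T \<circ> R (replicate n (Af 0 1))) (cube (wdim (replicate n (Af 0 1)))) x = T x"
    proof (cases "x \<in> cube n")
      case True
      then have "(\<lambda>k. if k < n then x k else 0) = x" by (auto simp: cube_def)
      then show ?thesis using True by (simp add: r w)
    next
      case False then show ?thesis using assms by (simp add: extensional_def w)
    qed
  qed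
  show ?thesis by (rule ext) (simp add: rlz_def pw_I1 rr)
qed


definition Aw :: "nat \<Rightarrow> fac" where
  "Aw k = (if k = 0 then Af 0 (1/3) else if k = 1 then Af (2/3) (-1/3) else Af (2/3) (1/3))"
definition sgn3 :: "nat \<Rightarrow> 'r::comm_ring_1" where "sgn3 k = (if k = 1 then -1 else 1)"
definition wd :: "nat \<Rightarrow> (nat \<Rightarrow> nat) \<Rightarrow> fac list" where "wd n c = map (\<lambda>i. Aw (c i)) [0..<n]"

lemma lsum_S1: "lsum H S1 = (\<Sum>y\<in>{0,1,2::nat}. sgn3 y * H (Aw y))"
  by (simp add: S1_def Aw_def sgn3_def)

lemma lsum_pw_post: "lsum G (pw X (Suc n)) = lsum (\<lambda>f. lsum (\<lambda>u. G (u @ [f])) (pw X n)) X"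
proof (induction n arbitrary: G)
  case 0 then show ?case by simp
next
  case (Suc n)
  have "lsum G (pw X (Suc (Suc n))) = lsum (\<lambda>f. lsum (\<lambda>u. G (f#u)) (pw X (Suc n))) X"
    by (simp only: pw.simps lsum_pre)
  also have "\<dots> = lsum (\<lambda>f. lsum (\<lambda>g. lsum (\<lambda>u. G (f#(u@[g]))) (pw X n)) X) X"
    by (simp only: Suc.IH)
  also have "\<dots> = lsum (\<lambda>g. lsum (\<lambda>f. lsum (\<lambda>u. G (f#(u@[g]))) (pw X n)) X) X"
    by (rule lsum_swap)
  also have "\<dots> = lsum (\<lambda>g. lsum (\<lambda>v. G (v @ [g])) (pw X (Suc n))) X"
    by (simp only: pw.simps lsum_pre append_Cons)
  finally show ?case .
qed

lemma sum_PiE_Suc: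
  assumes "finite A"
  shows "(\<Sum>c\<in>{..<Suc n} \<rightarrow>\<^sub>E A. F c) = (\<Sum>y\<in>A. \<Sum>g\<in>{..<n} \<rightarrow>\<^sub>E A. F (g(n := y)))"
proof -
  have "{..<Suc n} \<rightarrow>\<^sub>E A = (\<lambda>(y, g). g(n := y)) ` (A \<times> ({..<n} \<rightarrow>\<^sub>E A))"
    unfolding lessThan_Suc by (rule PiE_insert_eq)
  then have "(\<Sum>c\<in>{..<Suc n} \<rightarrow>\<^sub>E A. F c) = (\<Sum>p\<in>A \<times> ({..<n} \<rightarrow>\<^sub>E A). F ((\<lambda>(y, g). g(n := y)) p))"
    using inj_combinator[of n "{..<n}" "\<lambda>_. A"] by (simp add: sum.reindex)
  also have "\<dots> = (\<Sum>y\<in>A. \<Sum>g\<in>{..<n} \<rightarrow>\<^sub>E A. F (g(n := y)))"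
    by (simp add: sum.cartesian_product split_def)
  finally show ?thesis .
qed

lemma lsum_pw_S1: "lsum G (pw S1 n) = (\<Sum>c\<in>{..<n} \<rightarrow>\<^sub>E {0,1,2}. (\<Prod>i<n. sgn3 (c i)) * G (wd n c))"
proof (induction n arbitrary: G)
  case 0 then show ?case by (simp add: wd_def)
next
  case (Suc n)
  have "lsum G (pw S1 (Suc n)) = (\<Sum>y\<in>{0,1,2::nat}. sgn3 y * lsum (\<lambda>u. G (u @ [Aw y])) (pw S1 n))"
    by (simp only: lsum_pw_post lsum_S1)
  also have "\<dots> = (\<Sum>y\<in>{0,1,2::nat}. \<Sum>g\<in>{..<n} \<rightarrow>\<^sub>E {0,1,2}. sgn3 y * ((\<Prod>i<n. sgn3 (g i)) * G (wd n g @ [Aw y])))"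
    by (simp only: Suc.IH sum_distrib_left)
  also have "\<dots> = (\<Sum>y\<in>{0,1,2::nat}. \<Sum>g\<in>{..<n} \<rightarrow>\<^sub>E {0,1,2}. (\<Prod>i<Suc n. sgn3 ((g(n := y)) i)) * G (wd (Suc n) (g(n := y))))"
  proof (intro sum.cong refl)
    fix y g
    have p: "(\<Prod>i<Suc n. sgn3 ((g(n := y)) i)) = (\<Prod>i<n. sgn3 (g i)) * (sgn3 y :: 'a)"
      by (simp add: prod.lessThan_Suc)
    have w: "wd (Suc n) (g(n := y)) = wd n g @ [Aw y]"
      by (simp add: wd_def)
    show "sgn3 y * ((\<Prod>i<n. sgn3 (g i)) * G (wd n g @ [Aw y])) =
        (\<Prod>i<Suc n. sgn3 ((g(n := y)) i)) * G (wd (Suc n) (g(n := y)))"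
      by (simp only: p w mult_ac)
  qed
  also have "\<dots> = (\<Sum>c\<in>{..<Suc n} \<rightarrow>\<^sub>E {0,1,2}. (\<Prod>i<Suc n. sgn3 (c i)) * G (wd (Suc n) c))"
    by (rule sum_PiE_Suc[symmetric]) simp
  finally show ?case .
qed

definition ec :: "nat \<Rightarrow> (nat \<Rightarrow> nat) \<Rightarrow> nat \<Rightarrow> int" where
  "ec n c = (\<lambda>i. if i < n then (if c i = 0 then 0 else 2) else undefined)"
definition vc :: "nat \<Rightarrow> (nat \<Rightarrow> nat) \<Rightarrow> nat \<Rightarrow> int" where
  "vc n c = (\<lambda>i. if i < n then (if c i = 1 then -1 else 1) else undefined)"
definition cinv :: "nat \<Rightarrow> (nat \<Rightarrow> int) \<times> (nat \<Rightarrow> int) \<Rightarrow> nat \<Rightarrow> nat" where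
  "cinv n ev = (\<lambda>i. if i < n then (if fst ev i = 0 then 0 else if snd ev i = -1 then 1 else 2) else undefined)"

lemma PiE_lessThan: "f \<in> {..<n} \<rightarrow>\<^sub>E A \<longleftrightarrow> (\<forall>i<n. f i \<in> A) \<and> (\<forall>i. \<not> i < n \<longrightarrow> f i = undefined)"
  by (auto simp: PiE_iff extensional_def)

lemma bij_ecv: "bij_betw (\<lambda>c. (ec n c, vc n c)) ({..<n} \<rightarrow>\<^sub>E {0,1,2}) (Sigma ({..<n} \<rightarrow>\<^sub>E {0,2}) (Vset n))"
proof (rule bij_betw_byWitness[where f' = "cinv n"])
  show "\<forall>c\<in>{..<n} \<rightarrow>\<^sub>E {0,1,2}. cinv n (ec n c, vc n c) = c"
  proof
    fix c :: "nat \<Rightarrow> nat" assume "c \<in> {..<n} \<rightarrow>\<^sub>E {0,1,2}"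
    then have c: "\<And>i. i < n \<Longrightarrow> c i = 0 \<or> c i = 1 \<or> c i = 2" "\<And>i. \<not> i < n \<Longrightarrow> c i = undefined"
      unfolding PiE_lessThan by auto
    show "cinv n (ec n c, vc n c) = c"
    proof
      fix i show "cinv n (ec n c, vc n c) i = c i"
      proof (cases "i < n")
        case True then show ?thesis using c(1)[OF True] by (auto simp: cinv_def ec_def vc_def)
      next
        case False then show ?thesis using c(2)[OF False] by (simp add: cinv_def)
      qed
    qed
  qed
  show "\<forall>ev\<in>Sigma ({..<n} \<rightarrow>\<^sub>E {0,2}) (Vset n). (ec n (cinv n ev), vc n (cinv n ev)) = ev"
  proof
    fix ev assume "ev \<in> Sigma ({..<n} \<rightarrow>\<^sub>E {0,2}) (Vset n)"
    then obtain e v where ev: "ev = (e,v)" "e \<in> {..<n} \<rightarrow>\<^sub>E {0,2}" "v \<in> Vset n e" by auto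
    then have v: "v \<in> {..<n} \<rightarrow>\<^sub>E {-1,1}" "\<And>i. i<n \<Longrightarrow> e i = 0 \<Longrightarrow> v i = 1" by (auto simp: Vset_def)
    have e: "\<And>i. i < n \<Longrightarrow> e i = 0 \<or> e i = 2" "\<And>i. \<not> i < n \<Longrightarrow> e i = undefined"
      using ev(2) unfolding PiE_lessThan by auto
    have v2: "\<And>i. i < n \<Longrightarrow> v i = -1 \<or> v i = 1" "\<And>i. \<not> i < n \<Longrightarrow> v i = undefined"
      using v(1) unfolding PiE_lessThan by auto
    have "ec n (cinv n ev) = e"
    proof
      fix i show "ec n (cinv n ev) i = e i"
      proof (cases "i < n")
        case True then show ?thesis using e(1)[OF True] by (auto simp: cinv_def ec_def ev(1))
      next
        case False then show ?thesis using e(2)[OF False] by (simp add: ec_def)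
      qed
    qed
    moreover have "vc n (cinv n ev) = v"
    proof
      fix i show "vc n (cinv n ev) i = v i"
      proof (cases "i < n")
        case True then show ?thesis using e(1)[OF True] v2(1)[OF True] v(2)[OF True]
          by (auto simp: cinv_def vc_def ev(1))
      next
        case False then show ?thesis using v2(2)[OF False] by (simp add: vc_def)
      qed
    qed
    ultimately show "(ec n (cinv n ev), vc n (cinv n ev)) = ev" using ev by simp
  qed
  show "(\<lambda>c. (ec n c, vc n c)) ` ({..<n} \<rightarrow>\<^sub>E {0,1,2}) \<subseteq> Sigma ({..<n} \<rightarrow>\<^sub>E {0,2}) (Vset n)"
  proof
    fix p assume "p \<in> (\<lambda>c. (ec n c, vc n c)) ` ({..<n} \<rightarrow>\<^sub>E {0,1,2})"
    then obtain c where p: "p = (ec n c, vc n c)" by auto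
    have "ec n c \<in> {..<n} \<rightarrow>\<^sub>E {0,2}" unfolding PiE_lessThan by (simp add: ec_def)
    moreover have "vc n c \<in> Vset n (ec n c)" unfolding Vset_def PiE_lessThan by (simp add: vc_def ec_def)
    ultimately show "p \<in> Sigma ({..<n} \<rightarrow>\<^sub>E {0,2}) (Vset n)" using p by simp
  qed
  show "cinv n ` Sigma ({..<n} \<rightarrow>\<^sub>E {0,2}) (Vset n) \<subseteq> {..<n} \<rightarrow>\<^sub>E {0,1,2}"
  proof
    fix c assume "c \<in> cinv n ` Sigma ({..<n} \<rightarrow>\<^sub>E {0,2}) (Vset n)"
    then obtain ev where "c = cinv n ev" by auto
    then show "c \<in> {..<n} \<rightarrow>\<^sub>E {0,1,2}" unfolding PiE_lessThan by (simp add: cinv_def)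
  qed
qed

lemma wd_fdim: "f \<in> set (wd n c) \<Longrightarrow> fdim f = 1"
  by (auto simp: wd_def Aw_def)

lemma hmap_wd:
  "hmap n (ec n c) (vc n c) = R (wd n c)"
proof (rule ext)+
  fix x k
  have r: "R (wd n c) x = (\<lambda>k. if k < length (wd n c) then feval (wd n c ! k) (\<lambda>i. x (i + k)) else 0)"
    by (rule R_Af_word) (rule wd_fdim)
  have l: "length (wd n c) = n" by (simp add: wd_def)
  have nt: "k < n \<Longrightarrow> wd n c ! k = Aw (c k)" by (simp add: wd_def)
  show "hmap n (ec n c) (vc n c) x k = R (wd n c) x k"
    unfolding r l
    by (cases "k < n") (auto simp: nt hmap_def ec_def vc_def Aw_def field_simps)
qed

lemma SD_rlz:
  fixes T :: "(nat \<Rightarrow> real) \<Rightarrow> 'a"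
  assumes "T \<in> extensional (cube n)"
  shows "(SD_cube n T :: ('a,'r::comm_ring_1) chain) = rlz T (smul (-1) (pw S1 n))"
proof (cases "n = 0")
  case True
  have rr: "restrict (T \<circ> R []) (cube 0) = T"
  proof
    fix x show "restrict (T \<circ> R []) (cube 0) x = T x"
    proof (cases "x \<in> cube 0")
      case True
      then have "x = (\<lambda>_. 0)" by (auto simp: cube_def)
      then show ?thesis using True by simp
    next
      case False then show ?thesis using assms \<open>n = 0\<close> by (simp add: extensional_def)
    qed
  qed
  show ?thesis using True by (simp add: SD_cube_def rlz_def fun_eq_iff rr)
next
  case False
  show ?thesis
  proof (rule ext)
    fix S
    let ?G = "\<lambda>u. basis_chain (restrict (T \<circ> R u) (cube (wdim u))) S :: 'r"
    let ?F = "\<lambda>(e,v). (- (\<Prod>i<n. of_int (v i) :: 'r)) * basis_chain (restrict (T \<circ> hmap n e v) (cube n)) S"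
    have fin: "finite ({..<n} \<rightarrow>\<^sub>E {0::int,2})" "\<And>e. finite (Vset n e)"
      by (auto intro: finite_subset[of _ "{..<n} \<rightarrow>\<^sub>E {-1::int,1}"] simp: Vset_def finite_PiE)
    have "(SD_cube n T :: ('a,'r) chain) S = (\<Sum>ev\<in>Sigma ({..<n} \<rightarrow>\<^sub>E {0,2}) (Vset n). ?F ev)"
      using False by (simp add: SD_cube_def sum.Sigma[OF fin(1)] fin(2) split_def)
    also have "\<dots> = (\<Sum>c\<in>{..<n} \<rightarrow>\<^sub>E {0,1,2}. ?F (ec n c, vc n c))"
      by (rule sum.reindex_bij_betw[OF bij_ecv, symmetric])
    also have "\<dots> = (\<Sum>c\<in>{..<n} \<rightarrow>\<^sub>E {0,1,2}. - ((\<Prod>i<n. sgn3 (c i)) * ?G (wd n c)))"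
    proof (intro sum.cong refl)
      fix c
      have p: "(\<Prod>i<n. of_int (vc n c i)) = (\<Prod>i<n. sgn3 (c i) :: 'r)"
        by (intro prod.cong refl) (auto simp: vc_def sgn3_def)
      have w: "wdim (wd n c) = n" by (subst wdim_Af_word) (auto simp: wd_def Aw_def)
      show "?F (ec n c, vc n c) = - ((\<Prod>i<n. sgn3 (c i)) * ?G (wd n c))"
        unfolding prod.case p hmap_wd w by simp
    qed
    also have "\<dots> = rlz T (smul (-1) (pw S1 n)) S"
      by (simp add: rlz_def lsum_pw_S1 sum_negf)
    finally show "(SD_cube n T :: ('a,'r) chain) S = rlz T (smul (-1) (pw S1 n)) S" .
  qed
qed


lemma cont_proj: "continuous_map (powertop_real UNIV) euclideanreal (\<lambda>x. x i)"
  by (rule continuous_map_product_projection) simp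

lemma cont_feval: "continuous_map (powertop_real UNIV) euclideanreal (feval f)"
proof (cases f)
  case (Pt r)
  have "feval (Pt r) = (\<lambda>x. r)" by auto
  then show ?thesis using Pt by simp
next
  case (Af \<alpha> \<beta>)
  have e: "feval (Af \<alpha> \<beta>) = (\<lambda>x. \<alpha> + \<beta> * x 0)" by auto
  have "continuous_map (powertop_real UNIV) euclideanreal (\<lambda>x. \<alpha> + \<beta> * x 0)"
    by (intro continuous_map_add continuous_map_real_mult cont_proj continuous_map_const[THEN iffD2]) auto
  then show ?thesis using Af e by simp
next
  case (Bl c00 c10 c01 c11)
  have e: "feval (Bl c00 c10 c01 c11) = (\<lambda>x. (1 - x 0) * ((1 - x 1) * c00 + x 1 * c01) + x 0 * ((1 - x 1) * c10 + x 1 * c11))"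
    by auto
  have "continuous_map (powertop_real UNIV) euclideanreal (\<lambda>x. (1 - x 0) * ((1 - x 1) * c00 + x 1 * c01) + x 0 * ((1 - x 1) * c10 + x 1 * c11))"
    by (intro continuous_map_add continuous_map_diff continuous_map_real_mult cont_proj continuous_map_const[THEN iffD2]) auto
  then show ?thesis using Bl e by (simp only:)
qed

lemma cont_shift: "continuous_map (powertop_real UNIV) (powertop_real UNIV) (\<lambda>x i. x (i + d))"
  unfolding continuous_map_componentwise_UNIV by (simp add: cont_proj)

lemma cont_R_comp: "continuous_map (powertop_real UNIV) euclideanreal (\<lambda>x. R w x k)"
proof (induction w arbitrary: k)
  case Nil then show ?case by simp
next
  case (Cons f w)
  show ?case
  proof (cases "k = 0")
    case True then show ?thesis by (simp add: cont_feval)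
  next
    case False
    have "(\<lambda>x. R (f#w) x k) = (\<lambda>x. R w x (k-1)) \<circ> (\<lambda>x i. x (i + fdim f))"
      using False by (simp add: o_def)
    then show ?thesis using continuous_map_compose[OF cont_shift Cons.IH] by simp
  qed
qed

lemma cont_R: "continuous_map (powertop_real UNIV) (powertop_real UNIV) (R w)"
  unfolding continuous_map_componentwise_UNIV by (simp add: cont_R_comp)

lemma topspace_cube_top: "topspace (cube_top n) = cube n"
  by (simp add: cube_top_def)

lemma sing_restrict:
  assumes "continuous_map (powertop_real UNIV) (powertop_real UNIV) g" "\<And>x. x \<in> cube m \<Longrightarrow> g x \<in> cube n"
    and "T \<in> sing_cubes n X"
  shows "restrict (T \<circ> g) (cube m) \<in> sing_cubes m X"
proof -
  have g: "continuous_map (cube_top m) (cube_top n) g"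
    unfolding cube_top_def
    by (rule continuous_map_into_subtopology) (auto intro: continuous_map_from_subtopology assms(1) assms(2))
  have T: "continuous_map (cube_top n) X T" using assms(3) by (simp add: sing_cubes_def)
  have "continuous_map (cube_top m) X (T \<circ> g)" by (rule continuous_map_compose[OF g T])
  then have "continuous_map (cube_top m) X (restrict (T \<circ> g) (cube m))"
    by (rule continuous_map_eq) (simp add: topspace_cube_top)
  then show ?thesis by (simp add: sing_cubes_def)
qed

lemma sing_rlz_word:
  assumes "T \<in> sing_cubes n X" "wok w" "length w = n"
  shows "restrict (T \<circ> R w) (cube (wdim w)) \<in> sing_cubes (wdim w) X"
proof (rule sing_restrict[OF cont_R _ assms(1)])
  fix x assume "x \<in> cube (wdim w)"
  from R_cube[OF assms(2) this] show "R w x \<in> cube n" using assms(3) by simp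
qed

lemma is_chain_fs: "is_chain X n c \<Longrightarrow> fs c" by (simp add: is_chain_def fs_def)

lemma is_chain_zero: "is_chain X n (\<lambda>_. 0)" by (simp add: is_chain_def)

lemma nz_add: 
  fixes c d :: "('a,'r::comm_ring_1) chain"
  assumes "(c + d) T \<noteq> 0" shows "c T \<noteq> 0 \<or> d T \<noteq> 0"
proof (rule ccontr)
  assume "\<not> (c T \<noteq> 0 \<or> d T \<noteq> 0)"
  then have "c T = 0" "d T = 0" by auto
  then have "(c + d) T = 0" by (simp add: plus_fun_def)
  with assms show False by simp
qed


lemma is_chain_add: "is_chain X n c \<Longrightarrow> is_chain X n d \<Longrightarrow> is_chain X n (c + d)"
  unfolding is_chain_def
proof (intro conjI allI impI)
  assume h: "finite {T. c T \<noteq> 0} \<and> (\<forall>T. c T \<noteq> 0 \<longrightarrow> T \<in> sing_cubes n X)"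
    "finite {T. d T \<noteq> 0} \<and> (\<forall>T. d T \<noteq> 0 \<longrightarrow> T \<in> sing_cubes n X)"
  have s: "{T. (c + d) T \<noteq> 0} \<subseteq> {T. c T \<noteq> 0} \<union> {T. d T \<noteq> 0}"
    using nz_add by blast
  show "finite {T. (c + d) T \<noteq> 0}"
    using h by (intro finite_subset[OF s]) simp
  fix T assume "(c + d) T \<noteq> 0"
  then have "c T \<noteq> 0 \<or> d T \<noteq> 0" by (rule nz_add)
  then show "T \<in> sing_cubes n X" using h by blast
qed

lemma is_chain_smult: "is_chain X n c \<Longrightarrow> is_chain X n (smult_chain r c)"
  unfolding is_chain_def smult_chain_def
proof (intro conjI allI impI)
  assume h: "finite {T. c T \<noteq> 0} \<and> (\<forall>T. c T \<noteq> 0 \<longrightarrow> T \<in> sing_cubes n X)"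
  have s: "{T. r * c T \<noteq> 0} \<subseteq> {T. c T \<noteq> 0}" by auto
  show "finite {T. r * c T \<noteq> 0}"
    using h by (intro finite_subset[OF s]) simp
  fix T assume "r * c T \<noteq> 0"
  then have "c T \<noteq> 0" by auto
  then show "T \<in> sing_cubes n X" using h by blast
qed

lemma is_chain_basis:
  assumes "T \<in> sing_cubes n X" shows "is_chain X n (basis_chain T :: ('a,'r::comm_ring_1) chain)"
proof -
  have s: "{S. (basis_chain T :: ('a,'r) chain) S \<noteq> 0} \<subseteq> {T}" by (auto simp: basis_chain_def)
  show ?thesis unfolding is_chain_def
    using finite_subset[OF s] s assms by auto
qed

lemma is_chain_rlz:
  assumes "T \<in> sing_cubes n X" "\<And>c w. (c,w) \<in> set L \<Longrightarrow> wok w \<and> length w = n \<and> wdim w = m"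
  shows "is_chain X m (rlz T L)"
  using assms(2)
proof (induction L)
  case Nil then show ?case by (simp add: rlz_Nil is_chain_zero)
next
  case (Cons x L)
  obtain c w where x: "x = (c,w)" by force
  have w: "wok w" "length w = n" "wdim w = m" using Cons.prems x by auto
  have "restrict (T \<circ> R w) (cube (wdim w)) \<in> sing_cubes m X"
    using sing_rlz_word[OF assms(1) w(1,2)] w(3) by simp
  then show ?case unfolding x rlz_Cons using Cons
    by (intro is_chain_add is_chain_smult is_chain_basis) auto
qed

lemma is_chain_sum: "finite I \<Longrightarrow> (\<And>i. i \<in> I \<Longrightarrow> is_chain X n (f i)) \<Longrightarrow> is_chain X n (\<lambda>S. \<Sum>i\<in>I. f i S)"
proof (induction I rule: finite_induct)
  case empty then show ?case by (simp add: is_chain_zero)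
next
  case (insert x F)
  have "is_chain X n (f x + (\<lambda>S. \<Sum>i\<in>F. f i S))" using insert by (intro is_chain_add) auto
  then show ?case using insert by (simp add: plus_fun_def)
qed

lemma is_chain_lin_ext:
  assumes "is_chain X n c" "\<And>T. T \<in> sing_cubes n X \<Longrightarrow> is_chain X m (g T)"
  shows "is_chain X m (lin_ext g c)"
  unfolding lin_ext_def
proof (rule is_chain_sum)
  show "finite {T. c T \<noteq> 0}" using assms(1) by (simp add: is_chain_def)
  fix T assume "T \<in> {T. c T \<noteq> 0}"
  then have "is_chain X m (g T)" using assms by (auto simp: is_chain_def)
  then show "is_chain X m (\<lambda>S. c T * g T S)"
    using is_chain_smult[of X m "g T" "c T"] by (simp add: smult_chain_def)
qed

lemma lin_ext_compose':
  assumes "fs c" "\<And>T. c T \<noteq> 0 \<Longrightarrow> fs (g T)"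
  shows "lin_ext h (lin_ext g c) = lin_ext (\<lambda>T. lin_ext h (g T)) c"
proof -
  have f: "finite {T. c T \<noteq> 0}" using assms unfolding fs_def by auto
  have "lin_ext h (lin_ext g c) = (\<lambda>S. \<Sum>T\<in>{T. c T \<noteq> 0}. lin_ext h (smult_chain (c T) (g T)) S)"
    unfolding lin_ext_def[of g c]
    by (subst lin_ext_sum) (auto simp: f assms fs_smult[unfolded smult_chain_def] smult_chain_def)
  also have "\<dots> = lin_ext (\<lambda>T. lin_ext h (g T)) c"
    unfolding lin_ext_def[of _ c] using assms
    using lin_ext_smult[of "g T" h "c T" for T] by (simp add: smult_chain_def)
  finally show ?thesis .
qed


definition dsh :: "nat \<Rightarrow> (nat \<Rightarrow> real) \<Rightarrow> (nat \<Rightarrow> real)" where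
  "dsh n x = (\<lambda>k. if k < n then x (Suc k) else 0)"

definition Dg :: "nat \<Rightarrow> ((nat \<Rightarrow> real) \<Rightarrow> 'a) \<Rightarrow> ((nat \<Rightarrow> real) \<Rightarrow> 'a)" where
  "Dg n T = restrict (T \<circ> dsh n) (cube (Suc n))"

lemma cont_dsh: "continuous_map (powertop_real UNIV) (powertop_real UNIV) (dsh n)"
  unfolding continuous_map_componentwise_UNIV
proof
  fix k
  show "continuous_map (powertop_real UNIV) euclideanreal (\<lambda>x. dsh n x k)"
  proof (cases "k < n")
    case True
    then have "(\<lambda>x. dsh n x k) = (\<lambda>x. x (Suc k))" by (simp add: dsh_def)
    then show ?thesis by (simp add: cont_proj)
  next
    case False
    then have "(\<lambda>x. dsh n x k) = (\<lambda>x. 0)" by (simp add: dsh_def)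
    then show ?thesis by simp
  qed
qed

lemma sing_Dg: "T \<in> sing_cubes n X \<Longrightarrow> Dg n T \<in> sing_cubes (Suc n) X"
  unfolding Dg_def by (rule sing_restrict[OF cont_dsh]) (auto simp: dsh_def cube_def)

lemma dface1:
  assumes "T \<in> extensional (cube n)" "i = 0 \<or> i = 1"
  shows "face (Suc n) i 1 (Dg n T) = T"
proof
  fix x show "face (Suc n) i 1 (Dg n T) x = T x"
  proof (cases "x \<in> cube n")
    case True
    let ?p = "(\<lambda>k. if k < 1 - 1 then x k else if k = 1 - 1 then i else x (k - 1))"
    have p: "?p \<in> cube (Suc n)" using True assms(2) by (auto simp: cube_def)
    have d: "dsh n ?p = x" using True by (auto simp: dsh_def cube_def fun_eq_iff)
    show ?thesis using True p d by (simp add: face_def Dg_def del: One_nat_def)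
  next
    case False then show ?thesis using assms(1) by (simp add: face_def extensional_def)
  qed
qed

lemma dsh_insp: "1 \<le> j \<Longrightarrow> j \<le> n \<Longrightarrow> dsh n (insp j i x) = insp (j-1) i (dsh (n-1) x)"
  by (auto simp: dsh_def insp_def fun_eq_iff)

lemma dfaceS:
  assumes "1 \<le> j" "j \<le> n" "i = 0 \<or> i = 1"
  shows "face (Suc n) i (Suc j) (Dg n T) = Dg (n-1) (face n i j T)"
proof
  have n: "Suc (n - 1) = n" using assms by simp
  have e: "\<And>y jj. (\<lambda>k. if k < jj - 1 then y k else if k = jj - 1 then i else y (k - 1)) = insp (jj-1) i y"
    by (simp only: insp_def)
  fix x show "face (Suc n) i (Suc j) (Dg n T) x = Dg (n-1) (face n i j T) x"
  proof (cases "x \<in> cube n")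
    case True
    have c1: "insp j i x \<in> cube (Suc n)" using True assms by (intro insp_cube) auto
    have c2: "dsh (n-1) x \<in> cube (n-1)" using True by (auto simp: dsh_def cube_def)
    show ?thesis
      unfolding face_def e Dg_def n using True c1 c2 dsh_insp[OF assms(1) assms(2), of i x]
      by simp
  next
    case False then show ?thesis unfolding face_def Dg_def n by simp
  qed
qed

lemma bd_cube_Dg:
  assumes "T \<in> extensional (cube n)"
  shows "bd_cube a b (Suc n) (Dg n T) = smult_chain (a+b) (basis_chain T) +
     smult_chain (-1) (lin_ext (\<lambda>T'. basis_chain (Dg (n-1) T')) (bd_cube a b n T))"
proof
  fix S
  let ?F = "\<lambda>j. (-1)^(j+1) * (a * basis_chain (face (Suc n) 0 j (Dg n T)) S + b * basis_chain (face (Suc n) 1 j (Dg n T)) S)"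
  have "{1..Suc n} = insert 1 {Suc 1..Suc n}" by auto
  then have "bd_cube a b (Suc n) (Dg n T) S = ?F 1 + (\<Sum>j\<in>{Suc 1..Suc n}. ?F j)"
    by (simp add: bd_cube_def del: One_nat_def)
  also have "(\<Sum>j\<in>{Suc 1..Suc n}. ?F j) = (\<Sum>j\<in>{1..n}. ?F (Suc j))"
    by (rule sum.shift_bounds_cl_Suc_ivl)
  also have "\<dots> = (\<Sum>j\<in>{1..n}. - ((-1)^(j+1) * (a * basis_chain (Dg (n-1) (face n 0 j T)) S + b * basis_chain (Dg (n-1) (face n 1 j T)) S)))"
    by (intro sum.cong refl) (simp add: dfaceS)
  also have "?F 1 = (a + b) * basis_chain T S" using assms by (simp add: dface1 algebra_simps del: One_nat_def)
  finally show "bd_cube a b (Suc n) (Dg n T) S = (smult_chain (a+b) (basis_chain T) +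
     smult_chain (-1) (lin_ext (\<lambda>T'. basis_chain (Dg (n-1) T')) (bd_cube a b n T))) S"
    by (simp add: lin_ext_bd_cube smult_chain_def plus_fun_def sum_negf)
qed


lemma bd_cube_zero: "bd_cube a b 0 T = (\<lambda>_. 0)"
  by (simp add: bd_cube_def)

lemma lin_ext_bd_cube_cycle:
  fixes v :: "('a,'r::comm_ring_1) chain"
  assumes "bd a b n v = (\<lambda>_. 0)" shows "lin_ext (bd_cube a b n) v = (\<lambda>_. 0)"
proof (cases "n = 0")
  case True
  have "(bd_cube a b 0 :: ((nat \<Rightarrow> real) \<Rightarrow> 'a) \<Rightarrow> ('a,'r) chain) = (\<lambda>T. (\<lambda>_. 0))" by (rule ext) (simp add: bd_cube_zero)
  then show ?thesis unfolding True by (simp only: lin_ext_fun_zero)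
next
  case False then show ?thesis using assms by (simp add: bd_def)
qed

lemma fs_two: "fs (\<lambda>S. r * (a * basis_chain A S + b * basis_chain B S))"
proof -
  have "{S. r * (a * basis_chain A S + b * basis_chain B S) \<noteq> 0} \<subseteq> {A, B}"
    by (auto simp: basis_chain_def)
  then show ?thesis unfolding fs_def by (rule finite_subset) simp
qed

lemma fs_bd_cube: "fs (bd_cube a b n T)"
  unfolding bd_cube_def by (rule fs_sum) (simp, rule fs_two)

lemma bd_eq: "n \<noteq> 0 \<Longrightarrow> bd a b n c = lin_ext (bd_cube a b n) c"
  by (simp add: bd_def)

lemma fs_bd: "fs c \<Longrightarrow> fs (bd a b n c)"
  by (cases "n = 0") (auto simp: bd_def fs_zero intro: fs_lin_ext fs_bd_cube)

lemma bd_add: "fs c \<Longrightarrow> fs d \<Longrightarrow> bd a b n (c + d) = bd a b n c + bd a b n d"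
proof (cases "n = 0")
  case True then show ?thesis by (simp add: bd_def plus_fun_def)
next
  case False
  assume "fs c" "fs d"
  then show ?thesis by (simp only: bd_eq[OF False] lin_ext_add)
qed

lemma bd_smult: "fs c \<Longrightarrow> bd a b n (smult_chain r c) = smult_chain r (bd a b n c)"
proof (cases "n = 0")
  case True then show ?thesis by (simp add: bd_def smult_chain_def)
next
  case False
  assume "fs c"
  then show ?thesis by (simp only: bd_eq[OF False] lin_ext_smult)
qed

definition inB :: "'a topology \<Rightarrow> 'r::comm_ring_1 \<Rightarrow> 'r \<Rightarrow> nat \<Rightarrow> ('a,'r) chain \<Rightarrow> bool" where
  "inB X a b n w \<longleftrightarrow> (\<exists>c. is_chain X (Suc n) c \<and> w = bd a b (Suc n) c)"

lemma inB_add: "inB X a b n x \<Longrightarrow> inB X a b n y \<Longrightarrow> inB X a b n (x + y)"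
  unfolding inB_def using bd_add is_chain_add is_chain_fs by metis

lemma inB_smult: "inB X a b n x \<Longrightarrow> inB X a b n (smult_chain r x)"
  unfolding inB_def using bd_smult is_chain_smult is_chain_fs by metis

lemma hclass_eq:
  assumes "inB X a b n (x + smult_chain (-1) y)"
  shows "hclass X a b n x = hclass X a b n y"
proof -
  have hc: "\<And>z. hclass X a b n z = {(\<lambda>S. z S + w S) | w. inB X a b n w}"
    by (simp add: hclass_def inB_def)
  let ?d = "x + smult_chain (-1) y"
  have A: "\<And>w. inB X a b n w \<Longrightarrow> (\<lambda>S. x S + w S) \<in> hclass X a b n y"
  proof -
    fix w assume w: "inB X a b n w"
    have "(\<lambda>S. x S + w S) = (\<lambda>S. y S + (?d + w) S)"
      by (simp add: plus_fun_def smult_chain_def fun_eq_iff algebra_simps)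
    moreover have "inB X a b n (?d + w)" by (rule inB_add[OF assms w])
    ultimately show "(\<lambda>S. x S + w S) \<in> hclass X a b n y" unfolding hc by blast
  qed
  have B: "\<And>w. inB X a b n w \<Longrightarrow> (\<lambda>S. y S + w S) \<in> hclass X a b n x"
  proof -
    fix w assume w: "inB X a b n w"
    have "(\<lambda>S. y S + w S) = (\<lambda>S. x S + (smult_chain (-1) ?d + w) S)"
      by (simp add: plus_fun_def smult_chain_def fun_eq_iff algebra_simps)
    moreover have "inB X a b n (smult_chain (-1) ?d + w)" by (rule inB_add[OF inB_smult[OF assms] w])
    ultimately show "(\<lambda>S. y S + w S) \<in> hclass X a b n x" unfolding hc by blast
  qed
  show ?thesis
  proof
    show "hclass X a b n x \<subseteq> hclass X a b n y" using A unfolding hc[of x] by blast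
    show "hclass X a b n y \<subseteq> hclass X a b n x" using B unfolding hc[of y] by blast
  qed
qed

lemma set_pre: "(e,w) \<in> set (pre X Y) \<Longrightarrow> \<exists>c f d u. (c,f) \<in> set X \<and> (d,u) \<in> set Y \<and> w = f#u"
  by (auto simp: pre_def)

lemma set_smul: "(e,w) \<in> set (smul r L) \<Longrightarrow> \<exists>c. (c,w) \<in> set L"
  by (auto simp: smul_def)

lemma wf_pw:
  assumes "\<And>c f. (c,f) \<in> set X \<Longrightarrow> fok f \<and> fdim f = 1"
  shows "(c,w) \<in> set (pw X n) \<Longrightarrow> wok w \<and> length w = n \<and> wdim w = n"
proof (induction n arbitrary: c w)
  case 0 then show ?case by (simp add: wok_def)
next
  case (Suc n)
  then have "(c,w) \<in> set (pre X (pw X n))" by simp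
  from set_pre[OF this] obtain c' f d u where "(c',f) \<in> set X" "(d,u) \<in> set (pw X n)" "w = f#u"
    by blast
  then show ?case using Suc.IH assms by (auto simp: wok_def)
qed

lemma S1_ok: "(c,f) \<in> set S1 \<Longrightarrow> fok f \<and> fdim f = 1"
  by (auto simp: S1_def)
lemma I1_ok: "(c,f) \<in> set I1 \<Longrightarrow> fok f \<and> fdim f = 1"
  by (auto simp: I1_def)
lemma Ka_ok: "(c,f) \<in> set Ka \<Longrightarrow> fok f \<and> fdim f = 2"
  by (auto simp: Ka_def)
lemma Kb_ok: "(c,f) \<in> set Kb \<Longrightarrow> fok f \<and> fdim f = 2"
  by (auto simp: Kb_def)

lemma wf_Pm:
  fixes K :: "('r::comm_ring_1 \<times> fac) list"
  assumes "\<And>c f. (c,f) \<in> set K \<Longrightarrow> fok f \<and> fdim f = 2"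
  shows "(c,w) \<in> set (Pm K n) \<Longrightarrow> wok w \<and> length w = n \<and> wdim w = Suc n"
proof (induction n arbitrary: c w)
  case 0 then show ?case by simp
next
  case (Suc n)
  then have "(c,w) \<in> set (pre K (pw I1 n)) \<or> (c,w) \<in> set (smul (-1) (pre S1 (Pm K n)))" by simp
  then show ?case
  proof
    assume "(c,w) \<in> set (pre K (pw I1 n))"
    from set_pre[OF this] obtain c' f d u where "(c',f) \<in> set K" "(d,u) \<in> set (pw (I1 :: ('r \<times> fac) list) n)" "w = f#u"
      by blast
    then show ?case using wf_pw[OF I1_ok] assms by (fastforce simp: wok_def)
  next
    assume "(c,w) \<in> set (smul (-1) (pre S1 (Pm K n)))"
    from set_smul[OF this] obtain c'' where "(c'',w) \<in> set (pre S1 (Pm K n))" by blast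
    from set_pre[OF this] obtain c' f d u where "(c',f) \<in> set (S1 :: ('r \<times> fac) list)" "(d,u) \<in> set (Pm K n)" "w = f#u"
      by blast
    then show ?case using Suc.IH S1_ok by (fastforce simp: wok_def)
  qed
qed


lemma fbd_Pm_gen:
  assumes K: "\<And>G. lsum G (lext (fbd1 a b) K) = lam * (lsum G I1 - lsum G S1)"
    and K2: "\<And>c f. (c,f) \<in> set K \<Longrightarrow> fdim f = 2"
  shows "lsum G (fbd a b (Pm K n)) =
     lam * (lsum G (pw I1 n) - lsum G (pw S1 n)) - lsum G (Fc a b (Pm K (n - 1)))"
proof (cases n)
  case 0 then show ?thesis by (simp add: lsum_fbd_empty lsum_Fc_empty)
next
  case (Suc m) then show ?thesis using fbd_Pm[OF K K2] by simp
qed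

lemma Fc_empty: "Fc a b [] = []" by (simp add: Fc_def lext_def)

lemma cube_homotopy:
  fixes T :: "(nat \<Rightarrow> real) \<Rightarrow> 'a" and K :: "('r::comm_ring_1 \<times> fac) list"
  assumes Kh: "\<And>G. lsum G (lext (fbd1 a b) K) = lam * (lsum G I1 - lsum G S1)"
    and Kok: "\<And>c f. (c,f) \<in> set K \<Longrightarrow> fok f \<and> fdim f = 2"
    and T: "T \<in> extensional (cube n)"
  shows "bd a b (Suc n) (rlz T (Pm K n)) = smult_chain lam (basis_chain T) + smult_chain lam (SD_cube n T)
     + smult_chain (-1) (lin_ext (\<lambda>T'. rlz T' (Pm K (n - 1))) (bd_cube a b n T))"
proof -
  have K2: "\<And>c f. (c,f) \<in> set K \<Longrightarrow> fdim f = 2" using Kok by blast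
  have "bd a b (Suc n) (rlz T (Pm K n)) = rlz T (fbd a b (Pm K n))"
  proof (rule bd_rlz)
    fix c w assume "(c,w) \<in> set (Pm K n)"
    from wf_Pm[OF Kok this] show "wdim w = Suc n" by simp
  qed simp
  also have "\<dots> = rlz T (smul lam (pw I1 n) @ smul lam (smul (-1) (pw S1 n)) @ smul (-1) (Fc a b (Pm K (n - 1))))"
    by (rule rlz_feq) (simp add: fbd_Pm_gen[OF Kh K2] algebra_simps)
  also have "\<dots> = smult_chain lam (rlz T (pw I1 n)) + (smult_chain lam (rlz T (smul (-1) (pw S1 n)))
      + smult_chain (-1) (rlz T (Fc a b (Pm K (n - 1)))))"
    by (simp only: rlz_append rlz_smul)
  also have "rlz T (pw I1 n) = basis_chain T" by (rule rlz_I[OF T])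
  also have "rlz T (smul (-1) (pw S1 n)) = SD_cube n T" by (rule SD_rlz[OF T, symmetric])
  also have "rlz T (Fc a b (Pm K (n - 1))) = lin_ext (\<lambda>T'. rlz T' (Pm K (n - 1))) (bd_cube a b n T)"
  proof (cases n)
    case 0 then show ?thesis by (simp add: Fc_empty rlz_Nil bd_cube_zero lin_ext_zero)
  next
    case (Suc m)
    have "lin_ext (\<lambda>T'. rlz T' (Pm K m)) (bd_cube a b (Suc m) T) = rlz T (Fc a b (Pm K m))"
    proof (rule Fc_rlz)
      fix c w assume "(c,w) \<in> set (Pm K m)"
      from wf_Pm[OF Kok this] show "wok w \<and> length w = m" by simp
    qed
    then show ?thesis using Suc by simp
  qed
  finally show ?thesis by (simp only: add.assoc)
qed

lemma wf_smul_pw: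
  fixes r :: "'r::comm_ring_1"
  assumes "(c,w) \<in> set (smul r (pw S1 n))" shows "wok w \<and> length w = n \<and> wdim w = n"
proof -
  from set_smul[OF assms] obtain c' where "(c',w) \<in> set (pw (S1 :: ('r \<times> fac) list) n)" by blast
  from wf_pw[OF S1_ok this] show ?thesis .
qed

lemma sing_ext: "T \<in> sing_cubes n X \<Longrightarrow> T \<in> extensional (cube n)"
  by (simp add: sing_cubes_def)

lemma SD_is_chain:
  fixes u :: "('a,'r::comm_ring_1) chain"
  assumes "is_chain X n u" shows "is_chain X n (SD n u)"
  unfolding SD_def
proof (rule is_chain_lin_ext[OF assms])
  fix T assume T: "T \<in> sing_cubes n X"
  have "(SD_cube n T :: ('a,'r) chain) = rlz T (smul (-1) (pw S1 n))" by (rule SD_rlz[OF sing_ext[OF T]])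
  moreover have "is_chain X n (rlz T (smul (-1) (pw S1 n)) :: ('a,'r) chain)"
    by (rule is_chain_rlz[OF T]) (rule wf_smul_pw)
  ultimately show "is_chain X n (SD_cube n T :: ('a,'r) chain)" by simp
qed

lemma smult_zero_chain: "smult_chain r (\<lambda>_. 0) = (\<lambda>_. 0)" by (simp add: smult_chain_def)

lemma SD_cycle:
  fixes u :: "('a,'r::comm_ring_1) chain"
  assumes u: "is_chain X n u" and cyc: "bd a b n u = (\<lambda>_. 0)"
  shows "bd a b n (SD n u) = (\<lambda>_. 0)"
proof (cases n)
  case 0 then show ?thesis by (simp add: bd_def)
next
  case (Suc m)
  have fsu: "fs u" using u by (rule is_chain_fs)
  have n0: "n \<noteq> 0" using Suc by simp
  have ext: "\<And>T. u T \<noteq> 0 \<Longrightarrow> T \<in> extensional (cube n)"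
    using u by (auto simp: is_chain_def sing_cubes_def)
  let ?Q = "\<lambda>T'. rlz T' (pw S1 m) :: ('a,'r) chain"
  have "bd a b n (SD n u) = lin_ext (\<lambda>T. lin_ext (bd_cube a b n) (SD_cube n T)) u"
    unfolding SD_def bd_eq[OF n0]
    by (rule lin_ext_compose'[OF fsu]) (simp add: SD_rlz[OF ext] fs_rlz)
  also have "\<dots> = lin_ext (\<lambda>T. smult_chain (-1) (lin_ext ?Q (bd_cube a b n T))) u"
  proof (rule lin_ext_cong)
    fix T assume uT: "u T \<noteq> 0"
    have sdr: "SD_cube n T = rlz T (smul (-1) (pw S1 n))" by (rule SD_rlz[OF ext[OF uT]])
    have "lin_ext (bd_cube a b n) (SD_cube n T) = bd a b n (rlz T (smul (-1) (pw S1 n)))"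
      by (simp only: sdr bd_eq[OF n0])
    also have "\<dots> = rlz T (fbd a b (smul (-1) (pw S1 n)))"
    proof (rule bd_rlz)
      fix c w assume "(c,w) \<in> set (smul (-1::'r) (pw S1 n))"
      from wf_smul_pw[OF this] show "wdim w = n" by simp
    qed (simp add: Suc)
    also have "\<dots> = rlz T (smul (-1) (Fc a b (pw S1 m)))"
    proof (rule rlz_feq)
      fix G
      have fp: "lsum G (fbd a b (pw (S1::('r \<times> fac) list) (Suc m))) = lsum G (Fc a b (pw S1 m))"
        by (rule fbd_pw[OF fbd1_S1]) (simp add: S1_ok)
      show "lsum G (fbd a b (smul (-1) (pw S1 n))) = lsum G (smul (-1) (Fc a b (pw S1 m)))"
        by (simp only: lsum_fbd_smul lsum_smul Suc fp)
    qed
    also have "\<dots> = smult_chain (-1) (lin_ext ?Q (bd_cube a b n T))"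
      by (simp add: rlz_smul Suc Fc_rlz wf_pw[OF S1_ok])
    finally show "lin_ext (bd_cube a b n) (SD_cube n T) = smult_chain (-1) (lin_ext ?Q (bd_cube a b n T))" .
  qed
  also have "\<dots> = smult_chain (-1) (lin_ext ?Q (lin_ext (bd_cube a b n) u))"
    by (simp add: lin_ext_fun_smult lin_ext_compose'[OF fsu fs_bd_cube])
  also have "\<dots> = (\<lambda>_. 0)"
    by (simp add: lin_ext_bd_cube_cycle[OF cyc] lin_ext_zero smult_zero_chain)
  finally show ?thesis .
qed


lemma inB_zero: "inB X a b n (\<lambda>_. 0)"
  unfolding inB_def
  by (rule exI[of _ "\<lambda>_. 0"]) (simp add: is_chain_zero bd_def lin_ext_zero)

lemma homotopy_inB:
  fixes u :: "('a,'r::comm_ring_1) chain" and K :: "('r \<times> fac) list"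
  assumes Kh: "\<And>G. lsum G (lext (fbd1 a b) K) = lam * (lsum G I1 - lsum G S1)"
    and Kok: "\<And>c f. (c,f) \<in> set K \<Longrightarrow> fok f \<and> fdim f = 2"
    and u: "is_chain X n u" and cyc: "bd a b n u = (\<lambda>_. 0)"
  shows "inB X a b n (smult_chain lam (SD n u) + smult_chain lam u)"
proof -
  let ?c = "lin_ext (\<lambda>T. rlz T (Pm K n)) u"
  let ?P = "\<lambda>T'. rlz T' (Pm K (n - 1)) :: ('a,'r) chain"
  have fsu: "fs u" using u by (rule is_chain_fs)
  have ext: "\<And>T. u T \<noteq> 0 \<Longrightarrow> T \<in> extensional (cube n)"
    using u by (auto simp: is_chain_def sing_cubes_def)
  have ch: "is_chain X (Suc n) ?c"
  proof (rule is_chain_lin_ext[OF u])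
    fix T assume T: "T \<in> sing_cubes n X"
    show "is_chain X (Suc n) (rlz T (Pm K n))"
    proof (rule is_chain_rlz[OF T])
      fix c w assume "(c,w) \<in> set (Pm K n)"
      from wf_Pm[OF Kok this] show "wok w \<and> length w = n \<and> wdim w = Suc n" .
    qed
  qed
  have "bd a b (Suc n) ?c = lin_ext (bd_cube a b (Suc n)) ?c" by (rule bd_eq) simp
  also have "\<dots> = lin_ext (\<lambda>T. lin_ext (bd_cube a b (Suc n)) (rlz T (Pm K n))) u"
    by (rule lin_ext_compose'[OF fsu]) (rule fs_rlz)
  also have "\<dots> = lin_ext (\<lambda>T. smult_chain lam (basis_chain T) + smult_chain lam (SD_cube n T)
     + smult_chain (-1) (lin_ext ?P (bd_cube a b n T))) u"
  proof (rule lin_ext_cong)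
    fix T assume "u T \<noteq> 0"
    show "lin_ext (bd_cube a b (Suc n)) (rlz T (Pm K n)) = smult_chain lam (basis_chain T) + smult_chain lam (SD_cube n T)
     + smult_chain (-1) (lin_ext ?P (bd_cube a b n T))"
    proof -
      have hh: "bd a b (Suc n) (rlz T (Pm K n)) = smult_chain lam (basis_chain T) + smult_chain lam (SD_cube n T)
         + smult_chain (-1) (lin_ext ?P (bd_cube a b n T))"
        apply (rule cube_homotopy)
          apply (rule Kh)
         apply (erule Kok)
        apply (rule ext[OF \<open>u T \<noteq> 0\<close>])
        done
      moreover have "bd a b (Suc n) (rlz T (Pm K n)) = lin_ext (bd_cube a b (Suc n)) (rlz T (Pm K n))"
        by (rule bd_eq) simp
      ultimately show ?thesis by simp
    qed
  qed
  also have "\<dots> = smult_chain lam (lin_ext basis_chain u) + smult_chain lam (lin_ext (SD_cube n) u)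
     + smult_chain (-1) (lin_ext (\<lambda>T. lin_ext ?P (bd_cube a b n T)) u)"
    by (simp only: lin_ext_fun_add lin_ext_fun_smult)
  also have "lin_ext (\<lambda>T. lin_ext ?P (bd_cube a b n T)) u = lin_ext ?P (lin_ext (bd_cube a b n) u)"
    by (rule lin_ext_compose'[OF fsu fs_bd_cube, symmetric])
  also have "\<dots> = (\<lambda>_. 0)" by (simp add: lin_ext_bd_cube_cycle[OF cyc] lin_ext_zero)
  also have "lin_ext basis_chain u = u" by (rule lin_ext_self[OF fsu])
  also have "lin_ext (SD_cube n) u = SD n u" by (simp add: SD_def)
  finally have "bd a b (Suc n) ?c = smult_chain lam (SD n u) + smult_chain lam u"
    by (simp add: fun_eq_iff smult_chain_def algebra_simps)
  then show ?thesis unfolding inB_def using ch by metis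
qed

lemma torsion_inB:
  fixes v :: "('a,'r::comm_ring_1) chain"
  assumes v: "is_chain X n v" and cyc: "bd a b n v = (\<lambda>_. 0)"
  shows "inB X a b n (smult_chain (a+b) v)"
proof -
  let ?c = "lin_ext (\<lambda>T. basis_chain (Dg n T)) v :: ('a,'r) chain"
  let ?H = "\<lambda>T'. basis_chain (Dg (n-1) T') :: ('a,'r) chain"
  have fsv: "fs v" using v by (rule is_chain_fs)
  have ext: "\<And>T. v T \<noteq> 0 \<Longrightarrow> T \<in> extensional (cube n)"
    using v by (auto simp: is_chain_def sing_cubes_def)
  have ch: "is_chain X (Suc n) ?c"
    by (rule is_chain_lin_ext[OF v]) (intro is_chain_basis sing_Dg)
  have "bd a b (Suc n) ?c = lin_ext (bd_cube a b (Suc n)) ?c" by (rule bd_eq) simp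
  also have "\<dots> = lin_ext (\<lambda>T. lin_ext (bd_cube a b (Suc n)) (basis_chain (Dg n T))) v"
    by (rule lin_ext_compose'[OF fsv]) (rule fs_basis)
  also have "\<dots> = lin_ext (\<lambda>T. smult_chain (a+b) (basis_chain T) + smult_chain (-1) (lin_ext ?H (bd_cube a b n T))) v"
  proof (rule lin_ext_cong)
    fix T assume "v T \<noteq> 0"
    show "lin_ext (bd_cube a b (Suc n)) (basis_chain (Dg n T)) =
       smult_chain (a+b) (basis_chain T) + smult_chain (-1) (lin_ext ?H (bd_cube a b n T))"
      by (simp only: lin_ext_basis bd_cube_Dg[OF ext[OF \<open>v T \<noteq> 0\<close>]])
  qed
  also have "\<dots> = smult_chain (a+b) (lin_ext basis_chain v) + smult_chain (-1) (lin_ext (\<lambda>T. lin_ext ?H (bd_cube a b n T)) v)"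
    by (simp only: lin_ext_fun_add lin_ext_fun_smult)
  also have "lin_ext (\<lambda>T. lin_ext ?H (bd_cube a b n T)) v = lin_ext ?H (lin_ext (bd_cube a b n) v)"
    by (rule lin_ext_compose'[OF fsv fs_bd_cube, symmetric])
  also have "\<dots> = (\<lambda>_. 0)" by (simp add: lin_ext_bd_cube_cycle[OF cyc] lin_ext_zero)
  also have "lin_ext basis_chain v = v" by (rule lin_ext_self[OF fsv])
  finally have "bd a b (Suc n) ?c = smult_chain (a+b) v"
    by (simp add: fun_eq_iff smult_chain_def)
  then show ?thesis unfolding inB_def using ch by metis
qed

lemma SD_iter:
  fixes u :: "('a,'r::comm_ring_1) chain"
  assumes u: "is_chain X n u" and cyc: "bd a b n u = (\<lambda>_. 0)"
  shows "is_chain X n ((SD n ^^ k) u) \<and> bd a b n ((SD n ^^ k) u) = (\<lambda>_. 0)"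
proof (induction k)
  case 0 then show ?case using u cyc by simp
next
  case (Suc k)
  then have h: "is_chain X n ((SD n ^^ k) u)" "bd a b n ((SD n ^^ k) u) = (\<lambda>_. 0)" by auto
  show ?case using SD_is_chain[OF h(1)] SD_cycle[OF h] by simp
qed

lemma iter_inB:
  fixes u :: "('a,'r::comm_ring_1) chain" and K :: "('r \<times> fac) list"
  assumes Kh: "\<And>G. lsum G (lext (fbd1 a b) K) = lam * (lsum G I1 - lsum G S1)"
    and Kok: "\<And>c f. (c,f) \<in> set K \<Longrightarrow> fok f \<and> fdim f = 2"
    and u: "is_chain X n u" and cyc: "bd a b n u = (\<lambda>_. 0)"
  shows "inB X a b n (smult_chain (lam^k) ((SD n ^^ k) u) + smult_chain (-1) (smult_chain ((-lam)^k) u))"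
proof (induction k)
  case 0
  have "smult_chain (lam^0) ((SD n ^^ 0) u) + smult_chain (-1) (smult_chain ((-lam)^0) u) = (\<lambda>_. 0)"
    by (simp add: fun_eq_iff smult_chain_def)
  then show ?case using inB_zero by metis
next
  case (Suc k)
  let ?v = "(SD n ^^ k) u"
  have v: "is_chain X n ?v" "bd a b n ?v = (\<lambda>_. 0)" using SD_iter[OF u cyc] by auto
  have h: "inB X a b n (smult_chain lam (SD n ?v) + smult_chain lam ?v)"
    by (rule homotopy_inB[OF Kh Kok v])
  have "inB X a b n (smult_chain (lam^k) (smult_chain lam (SD n ?v) + smult_chain lam ?v) +
      smult_chain (-lam) (smult_chain (lam^k) ?v + smult_chain (-1) (smult_chain ((-lam)^k) u)))"
    by (intro inB_add inB_smult h Suc.IH)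
  moreover have "smult_chain (lam^k) (smult_chain lam (SD n ?v) + smult_chain lam ?v) +
      smult_chain (-lam) (smult_chain (lam^k) ?v + smult_chain (-1) (smult_chain ((-lam)^k) u))
    = smult_chain (lam^Suc k) ((SD n ^^ Suc k) u) + smult_chain (-1) (smult_chain ((-lam)^Suc k) u)"
    by (simp add: fun_eq_iff smult_chain_def algebra_simps)
  ultimately show ?case by metis
qed

lemma Ka_good: "lsum G (lext (fbd1 a b) Ka) = a * (lsum G I1 - lsum G S1)" by (rule fbd1_Ka)
lemma Kb_good: "lsum G (lext (fbd1 a b) Kb) = b * (lsum G I1 - lsum G S1)" by (rule fbd1_Kb)

lemma final_one:
  fixes u :: "('a,'r::comm_ring_1) chain" and K :: "('r \<times> fac) list"
  assumes Kh: "\<And>G. lsum G (lext (fbd1 a b) K) = lam * (lsum G I1 - lsum G S1)"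
    and Kok: "\<And>c f. (c,f) \<in> set K \<Longrightarrow> fok f \<and> fdim f = 2"
    and u: "is_chain X n u" and cyc: "bd a b n u = (\<lambda>_. 0)"
    and mu: "lam + mu = a + b"
  shows "hclass X a b n (smult_chain (lam ^ k) ((SD n ^^ k) u)) = hclass X a b n (smult_chain (mu ^ k) u)"
proof (rule hclass_eq)
  let ?q = "\<Sum>i<k. mu^(k - Suc i) * (-lam)^i"
  have "(-lam)^k - mu^k = (-lam - mu) * ?q" by (rule power_diff_sumr2)
  also have "-lam - mu = -(a+b)" using mu by (simp add: algebra_simps)
  finally have "(-lam)^k - mu^k = -(a+b) * ?q" .
  then have pd: "(-lam)^k = mu^k + -(a+b) * ?q" by (simp add: diff_eq_eq)
  have i1: "inB X a b n (smult_chain (lam^k) ((SD n ^^ k) u) + smult_chain (-1) (smult_chain ((-lam)^k) u))"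
    by (rule iter_inB[OF Kh Kok u cyc])
  have i2: "inB X a b n (smult_chain (-?q) (smult_chain (a+b) u))"
    by (intro inB_smult torsion_inB[OF u cyc])
  have eq: "smult_chain (lam ^ k) ((SD n ^^ k) u) + smult_chain (-1) (smult_chain (mu ^ k) u) =
     (smult_chain (lam^k) ((SD n ^^ k) u) + smult_chain (-1) (smult_chain ((-lam)^k) u)) +
     smult_chain (-?q) (smult_chain (a+b) u)"
    unfolding pd by (simp add: fun_eq_iff smult_chain_def algebra_simps)
  then show "inB X a b n (smult_chain (lam ^ k) ((SD n ^^ k) u) + smult_chain (-1) (smult_chain (mu ^ k) u))"
    by (subst eq) (rule inB_add[OF i1 i2])
qed

theorem lemma4:
  fixes X :: "'a topology" and a b :: "'r::comm_ring_1"
    and k n :: nat and u :: "('a,'r) chain"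
  assumes "is_chain X n u" and "bd a b n u = (\<lambda>_. 0)"
  shows "hclass X a b n (smult_chain (a ^ k) ((SD n ^^ k) u)) = hclass X a b n (smult_chain (b ^ k) u)
       \<and> hclass X a b n (smult_chain (b ^ k) ((SD n ^^ k) u)) = hclass X a b n (smult_chain (a ^ k) u)"
proof
  show "hclass X a b n (smult_chain (a ^ k) ((SD n ^^ k) u)) = hclass X a b n (smult_chain (b ^ k) u)"
    by (rule final_one[OF fbd1_Ka Ka_ok assms refl])
  show "hclass X a b n (smult_chain (b ^ k) ((SD n ^^ k) u)) = hclass X a b n (smult_chain (a ^ k) u)"
    by (rule final_one[OF fbd1_Kb Kb_ok assms add.commute])
qed


end
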